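(* Let $L=(\widehat{\mathbb L}(V),d)$ be a connected minimal cdgl with $V$ bounded above, and fix a finite filtration of $V$ by graded subspaces $V=V^0\supset V^1\supset\cdots\supset V^{q-1}\supset V^q=0$. Let $\{F^t\}_{t\ge1}$ be the associated filtration of $\widehat{\mathbb L}(V)$ and, for $n\ge1$, let $\mathcal F^n=\{\theta\in\operatorname{Der}L:\ \theta(F^r)\subset F^{n+r}\text{ for all } r\ge 1\}$. Then $\mathcal F^1$ is a complete differential graded Lie algebra with respect to the filtration $\{\mathcal F^n\}_{n\ge1}$.
   Context: All vector spaces are rational and $\mathbb Z$-graded. $\widehat{\mathbb L}(V)=\varprojlim_n \mathbb L(V)/\mathbb L(V)^n$ is the completion of the free graded Lie algebra on $V$ with respect to its lower central series; $\widehat{\mathbb L}^n(V)$ denotes the (completed) subspace of brackets of length $n$ and $\widehat{\mathbb L}^{\ge n}(V)$ that of brackets of length $\ge n$. "Connected" means concentrated in nonnegative degrees; "minimal" means $d$ is decomposable ($d(V)\subset\widehat{\mathbb L}^{\ge2}(V)$); $V$ bounded above means $V_{>m}=0$ for some $m$. $\operatorname{Der}L$ is the dgl of derivations of $L$ with the commutator bracket and differential $D=[d,-]$. The filtration $F^t$: for $n\ge1$, $p\ge0$, let $\widehat{\mathbb L}^{n,p}(V)$ be the span of the brackets $[v_1,[v_2,[\dots,[v_{n-1},v_n]\dots]]]\in\widehat{\mathbb L}^n(V)$ with $v_i\in V^{\alpha_i}$ and $\sum_i\alpha_i=p$, and set $F^{n,p}=\widehat{\mathbb L}^{n,p}(V)\oplus\widehat{\mathbb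 L}^{\ge n+1}(V)$. For $n\ge1$ and $0\le p\le nq-1$ put $F^t=F^{n,p}$ with $t=\frac{(n-1)nq}{2}+p+1$, so $\widehat{\mathbb L}(V)=F^1\supset F^2\supset\cdots$. A dgl $M$ filtered by a decreasing sequence of differential ideals $M=\mathcal F^1\supset\mathcal F^2\supset\cdots$ with $[\mathcal F^p,\mathcal F^q]\subset\mathcal F^{p+q}$ is complete if $M\to\varprojlim_n M/\mathcal F^n$ is an isomorphism. *)

theory Defs
  imports Complex_Main "HOL-Library.Function_Algebras"
begin

text \<open>V is a graded rational vector space given by a homogeneous basis indexed by
 type 'b with degree function deg. The completed tensor algebra is modelled by functions
 from words (lists of basis letters) to rationals; the completed free graded Lie algebra
 is the closure of the Lie subalgebra generated by V (degreewise completion w.r.t. bracket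
 length).\<close>

type_synonym 'b tens = "'b list \<Rightarrow> rat"

definition ksign :: "int \<Rightarrow> rat" where
  "ksign k = (if even k then 1 else -1)"

definition smul :: "rat \<Rightarrow> 'b tens \<Rightarrow> 'b tens" where
  "smul c x = (\<lambda>w. c * x w)"

definition wdeg :: "('b \<Rightarrow> int) \<Rightarrow> 'b list \<Rightarrow> int" where
  "wdeg deg w = sum_list (map deg w)"

definition degs :: "('b \<Rightarrow> int) \<Rightarrow> 'b tens \<Rightarrow> int set" where
  "degs deg x = {wdeg deg w | w. x w \<noteq> 0}"

definition homog :: "('b \<Rightarrow> int) \<Rightarrow> int \<Rightarrow> 'b tens \<Rightarrow> bool" where
  "homog deg k x \<longleftrightarrow> (\<forall>w. x w \<noteq> 0 \<longrightarrow> wdeg deg w = k)"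

definition degcomp :: "('b \<Rightarrow> int) \<Rightarrow> 'b tens \<Rightarrow> int \<Rightarrow> 'b tens" where
  "degcomp deg x k = (\<lambda>w. if wdeg deg w = k then x w else 0)"

definition lencomp :: "'b tens \<Rightarrow> nat \<Rightarrow> 'b tens" where
  "lencomp x n = (\<lambda>w. if length w = n then x w else 0)"

text \<open>Graded completed tensor algebra: finitely many degrees, and in each bracket length
 finitely many words (direct sum over degrees of the product over lengths).\<close>
definition TT :: "('b \<Rightarrow> int) \<Rightarrow> 'b tens set" where
  "TT deg = {x. finite (degs deg x) \<and> (\<forall>n. finite {w. length w = n \<and> x w \<noteq> 0})}"

text \<open>Graded commutator x y - (-1)^(|x||y|) y x, extended bilinearly.\<close>
definition br :: "('b \<Rightarrow> int) \<Rightarrow> 'b tens \<Rightarrow> 'b tens \<Rightarrow> 'b tens" where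
  "br deg x y = (\<lambda>w. \<Sum>i\<le>length w.
      x (take i w) * y (drop i w)
      - ksign (wdeg deg (take i w) * wdeg deg (drop i w)) * y (take i w) * x (drop i w))"

definition Vsp :: "('b \<Rightarrow> int) \<Rightarrow> 'b tens set" where
  "Vsp deg = {x \<in> TT deg. \<forall>w. x w \<noteq> 0 \<longrightarrow> length w = 1}"

inductive_set lspan :: "'b tens set \<Rightarrow> 'b tens set" for S where
  lspan_zero: "0 \<in> lspan S"
| lspan_base: "x \<in> S \<Longrightarrow> x \<in> lspan S"
| lspan_add: "x \<in> lspan S \<Longrightarrow> y \<in> lspan S \<Longrightarrow> x + y \<in> lspan S"
| lspan_smul: "x \<in> lspan S \<Longrightarrow> smul c x \<in> lspan S"

fun rbr :: "('b \<Rightarrow> int) \<Rightarrow> 'b tens list \<Rightarrow> 'b tens" where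
  "rbr deg [] = 0"
| "rbr deg [v] = v"
| "rbr deg (v # vs) = br deg v (rbr deg vs)"

definition Ln :: "('b \<Rightarrow> int) \<Rightarrow> nat \<Rightarrow> 'b tens set" where
  "Ln deg n = lspan {rbr deg vs | vs. length vs = n \<and> set vs \<subseteq> Vsp deg}"

definition Lhat :: "('b \<Rightarrow> int) \<Rightarrow> 'b tens set" where
  "Lhat deg = {x \<in> TT deg. \<forall>n. lencomp x n \<in> Ln deg n}"

definition Lge :: "('b \<Rightarrow> int) \<Rightarrow> nat \<Rightarrow> 'b tens set" where
  "Lge deg n = {x \<in> Lhat deg. \<forall>w. length w < n \<longrightarrow> x w = 0}"

definition Lnp :: "('b \<Rightarrow> int) \<Rightarrow> (nat \<Rightarrow> 'b tens set) \<Rightarrow> nat \<Rightarrow> nat \<Rightarrow> nat \<Rightarrow> 'b tens set" where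
  "Lnp deg Vf q n p = lspan {rbr deg vs | vs. length vs = n \<and>
      (\<exists>as. length as = n \<and> (\<forall>i<n. as ! i \<le> q \<and> vs ! i \<in> Vf (as ! i)) \<and> sum_list as = p)}"

definition Fnp :: "('b \<Rightarrow> int) \<Rightarrow> (nat \<Rightarrow> 'b tens set) \<Rightarrow> nat \<Rightarrow> nat \<Rightarrow> nat \<Rightarrow> 'b tens set" where
  "Fnp deg Vf q n p = {x \<in> Lhat deg. (\<forall>w. length w < n \<longrightarrow> x w = 0) \<and> lencomp x n \<in> Lnp deg Vf q n p}"

definition Ffilt :: "('b \<Rightarrow> int) \<Rightarrow> (nat \<Rightarrow> 'b tens set) \<Rightarrow> nat \<Rightarrow> nat \<Rightarrow> 'b tens set" where
  "Ffilt deg Vf q t = {x. \<exists>n p. 1 \<le> n \<and> p < n * q \<and> t = (n - 1) * n * q div 2 + p + 1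
                              \<and> x \<in> Fnp deg Vf q n p}"

definition is_der :: "('b \<Rightarrow> int) \<Rightarrow> int \<Rightarrow> ('b tens \<Rightarrow> 'b tens) \<Rightarrow> bool" where
  "is_der deg k \<theta> \<longleftrightarrow>
     (\<forall>x. x \<notin> Lhat deg \<longrightarrow> \<theta> x = 0) \<and>
     (\<forall>x\<in>Lhat deg. \<theta> x \<in> Lhat deg) \<and>
     (\<forall>x\<in>Lhat deg. \<forall>y\<in>Lhat deg. \<theta> (x + y) = \<theta> x + \<theta> y) \<and>
     (\<forall>c. \<forall>x\<in>Lhat deg. \<theta> (smul c x) = smul c (\<theta> x)) \<and>
     (\<forall>j. \<forall>x\<in>Lhat deg. homog deg j x \<longrightarrow> homog deg (j + k) (\<theta> x)) \<and>
     (\<forall>j. \<forall>x\<in>Lhat deg. \<forall>y\<in>Lhat deg. homog deg j x \<longrightarrow>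
         \<theta> (br deg x y) = br deg (\<theta> x) y + smul (ksign (k * j)) (br deg x (\<theta> y)))"

definition DerL :: "('b \<Rightarrow> int) \<Rightarrow> ('b tens \<Rightarrow> 'b tens) set" where
  "DerL deg = {\<theta>. \<exists>K f. finite K \<and> (\<forall>k\<in>K. is_der deg k (f k)) \<and> \<theta> = (\<lambda>x. \<Sum>k\<in>K. f k x)}"

definition dercomp :: "('b \<Rightarrow> int) \<Rightarrow> ('b tens \<Rightarrow> 'b tens) \<Rightarrow> int \<Rightarrow> ('b tens \<Rightarrow> 'b tens)" where
  "dercomp deg \<theta> k = (\<lambda>x. if x \<in> Lhat deg
      then (\<Sum>j\<in>degs deg x. degcomp deg (\<theta> (degcomp deg x j)) (j + k)) else 0)"

definition dbr :: "int \<Rightarrow> int \<Rightarrow> ('b tens \<Rightarrow> 'b tens) \<Rightarrow> ('b tens \<Rightarrow> 'b tens) \<Rightarrow> ('b tens \<Rightarrow> 'b tens)" where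
  "dbr j k \<theta> \<eta> = (\<lambda>x. \<theta> (\<eta> x) - smul (ksign (j * k)) (\<eta> (\<theta> x)))"

definition DF :: "('b \<Rightarrow> int) \<Rightarrow> (nat \<Rightarrow> 'b tens set) \<Rightarrow> nat \<Rightarrow> nat \<Rightarrow> ('b tens \<Rightarrow> 'b tens) set" where
  "DF deg Vf q n = {\<theta> \<in> DerL deg. \<forall>r\<ge>1. \<forall>x\<in>Ffilt deg Vf q r. \<theta> x \<in> Ffilt deg Vf q (n + r)}"

definition graded_subspace_V :: "('b \<Rightarrow> int) \<Rightarrow> 'b tens set \<Rightarrow> bool" where
  "graded_subspace_V deg W \<longleftrightarrow> W \<subseteq> Vsp deg \<and> 0 \<in> W \<and>
     (\<forall>x\<in>W. \<forall>y\<in>W. x + y \<in> W) \<and> (\<forall>c. \<forall>x\<in>W. smul c x \<in> W) \<and>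
     (\<forall>x\<in>W. \<forall>k. degcomp deg x k \<in> W)"

end

theory Submission
  imports Defs
begin

lemma sum_app: "(\<Sum>i\<in>S. f i) (w::'a) = (\<Sum>i\<in>S. f i w)"
  by (induction S rule: infinite_finite_induct) auto

lemma smul_apply[simp]: "smul c x w = c * x w" by (simp add: smul_def)
lemma degcomp_apply: "degcomp deg x k w = (if wdeg deg w = k then x w else 0)"
  by (simp add: degcomp_def)
lemma lencomp_apply: "lencomp x n w = (if length w = n then x w else 0)"
  by (simp add: lencomp_def)
lemma wdeg_append[simp]: "wdeg deg (u @ v) = wdeg deg u + wdeg deg v"
  by (simp add: wdeg_def)
lemma wdeg_take_drop: "wdeg deg (take i w) + wdeg deg (drop i w) = wdeg deg w"
  by (metis append_take_drop_id wdeg_append)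
lemma ksign_add: "ksign (a + b) = ksign a * ksign b"
  by (auto simp: ksign_def)
lemma ksign_sq: "ksign a * ksign a = 1"
  by (auto simp: ksign_def)
lemma ksign_cases: "ksign a = 1 \<or> ksign a = -1"
  by (auto simp: ksign_def)

lemma smul_add: "smul c (x + y) = smul c x + smul c y"
  by (simp add: fun_eq_iff algebra_simps)
lemma smul_smul: "smul c (smul e x) = smul (c*e) x"
  by (simp add: fun_eq_iff)
lemma smul_zero[simp]: "smul c 0 = 0" by (simp add: fun_eq_iff)
lemma smul_one[simp]: "smul 1 x = x" by (simp add: fun_eq_iff)
lemma smul_0[simp]: "smul 0 x = 0" by (simp add: fun_eq_iff)
lemma minus_smul: "x - y = x + smul (-1) y" by (simp add: fun_eq_iff)
lemma smul_sum: "smul c (\<Sum>i\<in>S. f i) = (\<Sum>i\<in>S. smul c (f i))"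
  by (simp add: fun_eq_iff sum_app sum_distrib_left)

lemma lspan_sum: "(\<forall>i\<in>S. f i \<in> lspan G) \<Longrightarrow> (\<Sum>i\<in>S. f i) \<in> lspan G"
  by (induction S rule: infinite_finite_induct) (auto intro: lspan.intros)

lemma lspan_minus: "x \<in> lspan G \<Longrightarrow> y \<in> lspan G \<Longrightarrow> x - y \<in> lspan G"
  unfolding minus_smul by (auto intro: lspan.intros)

lemma lspan_subset: "z \<in> lspan G \<Longrightarrow> G \<subseteq> lspan H \<Longrightarrow> z \<in> lspan H"
  by (induction z rule: lspan.induct) (auto intro: lspan.intros)

lemma lspan_mono: "G \<subseteq> H \<Longrightarrow> z \<in> lspan G \<Longrightarrow> z \<in> lspan H"
  by (erule lspan_subset) (auto intro: lspan.intros)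

lemma lspan_lin:
  assumes "f 0 = 0" "\<And>x y. f (x + y) = f x + f y" "\<And>c x. f (smul c x) = smul c (f x)"
    and "\<And>g. g \<in> G \<Longrightarrow> f g \<in> lspan H"
  shows "z \<in> lspan G \<Longrightarrow> f z \<in> lspan H"
proof (induction z rule: lspan.induct)
  case lspan_zero then show ?case by (subst assms(1)) (rule lspan.intros)
next
  case (lspan_base x) then show ?case by (rule assms(4))
next
  case (lspan_add x y) then show ?case by (subst assms(2)) (rule lspan.intros)
next
  case (lspan_smul x c) then show ?case by (subst assms(3)) (rule lspan.intros)
qed

lemma lspan_zero_set: "z \<in> lspan {0} \<Longrightarrow> z = 0"
  by (induction z rule: lspan.induct) auto

lemma br_apply: "br deg x y w = (\<Sum>i\<le>length w.
      x (take i w) * y (drop i w)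
      - ksign (wdeg deg (take i w) * wdeg deg (drop i w)) * y (take i w) * x (drop i w))"
  by (simp add: br_def)

lemma br_add1: "br deg (x + x') y = br deg x y + br deg x' y"
  by (simp add: fun_eq_iff br_apply sum.distrib[symmetric] algebra_simps)
lemma br_add2: "br deg x (y + y') = br deg x y + br deg x y'"
  by (simp add: fun_eq_iff br_apply sum.distrib[symmetric] algebra_simps)
lemma br_smul1: "br deg (smul c x) y = smul c (br deg x y)"
  by (simp add: fun_eq_iff br_apply sum_distrib_left algebra_simps)
lemma br_smul2: "br deg x (smul c y) = smul c (br deg x y)"
  by (simp add: fun_eq_iff br_apply sum_distrib_left algebra_simps)
lemma br_zero1[simp]: "br deg 0 y = 0"
  by (simp add: fun_eq_iff br_apply)
lemma br_zero2[simp]: "br deg x 0 = 0"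
  by (simp add: fun_eq_iff br_apply)
lemma br_sum1: "br deg (\<Sum>i\<in>S. f i) y = (\<Sum>i\<in>S. br deg (f i) y)"
  by (induction S rule: infinite_finite_induct) (simp_all only: sum.empty sum.infinite sum.insert br_zero1 br_add1 not_False_eq_True)
lemma br_sum2: "br deg y (\<Sum>i\<in>S. f i) = (\<Sum>i\<in>S. br deg y (f i))"
  by (induction S rule: infinite_finite_induct) (simp_all only: sum.empty sum.infinite sum.insert br_zero2 br_add2 not_False_eq_True)

lemma br_minus1: "br deg (x - x') y = br deg x y - br deg x' y"
  by (simp add: fun_eq_iff br_apply sum_subtractf[symmetric] algebra_simps)
lemma br_minus2: "br deg x (y - y') = br deg x y - br deg x y'"
  by (simp add: fun_eq_iff br_apply sum_subtractf[symmetric] algebra_simps)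

lemma br_local:
  assumes "\<And>u. length u \<le> length w \<Longrightarrow> x u = x' u \<and> y u = y' u"
  shows "br deg x y w = br deg x' y' w"
  unfolding br_apply by (rule sum.cong) (auto simp: assms)

lemma br_vanish:
  assumes "\<And>u. length u < m \<Longrightarrow> x u = 0" "\<And>u. length u < n \<Longrightarrow> y u = 0"
    and "length w < m + n"
  shows "br deg x y w = 0"
  unfolding br_apply
proof (rule sum.neutral, intro ballI)
  fix i assume "i \<in> {..length w}"
  then have "length (take i w) < m \<or> length (drop i w) < n" using assms(3) by auto
  moreover have "length (take i w) < n \<or> length (drop i w) < m" using assms(3) \<open>i \<in> _\<close> by auto
  ultimately show "x (take i w) * y (drop i w) -
         ksign (wdeg deg (take i w) * wdeg deg (drop i w)) * y (take i w) * x (drop i w) = 0"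
    using assms(1,2) by auto
qed

lemma br_supp:
  assumes "br deg x y w \<noteq> 0"
  shows "\<exists>u v. w = u @ v \<and> ((x u \<noteq> 0 \<and> y v \<noteq> 0) \<or> (y u \<noteq> 0 \<and> x v \<noteq> 0))"
proof -
  from assms obtain i where "i \<le> length w" and
    ne: "x (take i w) * y (drop i w)
      - ksign (wdeg deg (take i w) * wdeg deg (drop i w)) * y (take i w) * x (drop i w) \<noteq> 0"
    unfolding br_apply by (meson atMost_iff sum.neutral)
  then show ?thesis
    by (intro exI[of _ "take i w"] exI[of _ "drop i w"]) auto
qed

lemma finite_supp_br:
  assumes "finite {w. x w \<noteq> 0}" "finite {w. y w \<noteq> 0}"
  shows "finite {w. br deg x y w \<noteq> 0}"
proof -
  let ?X = "{w. x w \<noteq> 0}" and ?Y = "{w. y w \<noteq> 0}"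
  have "{w. br deg x y w \<noteq> 0} \<subseteq> (\<lambda>(u,v). u @ v) ` (?X \<times> ?Y \<union> ?Y \<times> ?X)"
    by (auto dest!: br_supp[of deg])
  moreover have "finite ((\<lambda>(u,v). u @ v) ` (?X \<times> ?Y \<union> ?Y \<times> ?X))"
    using assms by auto
  ultimately show ?thesis by (rule finite_subset)
qed

lemma TT_fsupp: "finite {w. x w \<noteq> 0} \<Longrightarrow> x \<in> TT deg"
proof -
  assume f: "finite {w. x w \<noteq> 0}"
  have "degs deg x = wdeg deg ` {w. x w \<noteq> 0}" by (auto simp: degs_def)
  then show ?thesis using f unfolding TT_def
    by (auto intro: finite_subset[OF _ f])
qed

lemma degcomp_add: "degcomp deg (x + y) k = degcomp deg x k + degcomp deg y k"
  by (simp add: fun_eq_iff degcomp_apply)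
lemma degcomp_smul: "degcomp deg (smul c x) k = smul c (degcomp deg x k)"
  by (simp add: fun_eq_iff degcomp_apply)
lemma degcomp_zero[simp]: "degcomp deg 0 k = 0"
  by (simp add: fun_eq_iff degcomp_apply)
lemma degcomp_minus: "degcomp deg (x - y) k = degcomp deg x k - degcomp deg y k"
  by (simp add: fun_eq_iff degcomp_apply)
lemma degcomp_sum: "degcomp deg (\<Sum>i\<in>S. f i) k = (\<Sum>i\<in>S. degcomp deg (f i) k)"
  by (simp add: fun_eq_iff degcomp_apply sum_app)
lemma lencomp_add: "lencomp (x + y) n = lencomp x n + lencomp y n"
  by (simp add: fun_eq_iff lencomp_apply)
lemma lencomp_smul: "lencomp (smul c x) n = smul c (lencomp x n)"
  by (simp add: fun_eq_iff lencomp_apply)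
lemma lencomp_zero[simp]: "lencomp 0 n = 0"
  by (simp add: fun_eq_iff lencomp_apply)
lemma lencomp_minus: "lencomp (x - y) n = lencomp x n - lencomp y n"
  by (simp add: fun_eq_iff lencomp_apply)
lemma lencomp_lencomp: "lencomp (lencomp x n) m = (if m = n then lencomp x n else 0)"
  by (simp add: fun_eq_iff lencomp_apply)
lemma degcomp_lencomp: "degcomp deg (lencomp x n) k = lencomp (degcomp deg x k) n"
  by (simp add: fun_eq_iff lencomp_apply degcomp_apply)
lemma degcomp_degcomp: "degcomp deg (degcomp deg x j) k = (if k = j then degcomp deg x j else 0)"
  by (simp add: fun_eq_iff degcomp_apply)

lemma TT_zero: "0 \<in> TT deg"
  by (rule TT_fsupp) simp

lemma TT_sub: assumes "x \<in> TT deg" "\<And>w. y w \<noteq> 0 \<Longrightarrow> x w \<noteq> 0" shows "y \<in> TT deg"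
proof -
  have "degs deg y \<subseteq> degs deg x" using assms(2) by (auto simp: degs_def)
  then have 1: "finite (degs deg y)" using assms(1) by (auto simp: TT_def intro: finite_subset)
  have "finite {w. length w = n \<and> y w \<noteq> 0}" for n
  proof (rule finite_subset)
    show "{w. length w = n \<and> y w \<noteq> 0} \<subseteq> {w. length w = n \<and> x w \<noteq> 0}" using assms(2) by auto
    show "finite {w. length w = n \<and> x w \<noteq> 0}" using assms(1) by (simp add: TT_def)
  qed
  then show ?thesis using 1 by (simp add: TT_def)
qed

lemma TT_add: assumes "x \<in> TT deg" "y \<in> TT deg" shows "x + y \<in> TT deg"
proof -
  have "degs deg (x + y) \<subseteq> degs deg x \<union> degs deg y" by (auto simp: degs_def)
  then have 1: "finite (degs deg (x+y))" using assms by (auto simp: TT_def intro: finite_subset)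
  have "finite {w. length w = n \<and> (x+y) w \<noteq> 0}" for n
  proof (rule finite_subset)
    show "{w. length w = n \<and> (x+y) w \<noteq> 0} \<subseteq> {w. length w = n \<and> x w \<noteq> 0} \<union> {w. length w = n \<and> y w \<noteq> 0}" by auto
    show "finite ({w. length w = n \<and> x w \<noteq> 0} \<union> {w. length w = n \<and> y w \<noteq> 0})" using assms by (simp add: TT_def)
  qed
  then show ?thesis using 1 by (simp add: TT_def)
qed

lemma TT_smul: "x \<in> TT deg \<Longrightarrow> smul c x \<in> TT deg"
  by (erule TT_sub) simp
lemma TT_degcomp: "x \<in> TT deg \<Longrightarrow> degcomp deg x k \<in> TT deg"
  by (erule TT_sub) (simp add: degcomp_apply split: if_splits)
lemma TT_lencomp: "x \<in> TT deg \<Longrightarrow> lencomp x m \<in> TT deg"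
  by (erule TT_sub) (simp add: lencomp_apply split: if_splits)

lemma TT_finite_degs: "x \<in> TT deg \<Longrightarrow> finite (degs deg x)"
  by (simp add: TT_def)

lemma degcomp_decomp:
  assumes "finite (degs deg x)"
  shows "x = (\<Sum>j\<in>degs deg x. degcomp deg x j)"
proof (rule ext)
  fix w
  have "(\<Sum>j\<in>degs deg x. degcomp deg x j) w = (\<Sum>j\<in>degs deg x. if wdeg deg w = j then x w else 0)"
    by (simp add: sum_app degcomp_apply)
  also have "\<dots> = x w"
    using assms by (auto simp: sum.delta degs_def)
  finally show "x w = (\<Sum>j\<in>degs deg x. degcomp deg x j) w" by simp
qed

lemma degcomp_outside: "j \<notin> degs deg x \<Longrightarrow> degcomp deg x j = 0"
  by (auto simp: fun_eq_iff degcomp_apply degs_def)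

lemma Vsp_fsupp: assumes "x \<in> Vsp deg" shows "finite {w. x w \<noteq> 0}"
proof -
  have "{w. x w \<noteq> 0} = {w. length w = 1 \<and> x w \<noteq> 0}" using assms by (auto simp: Vsp_def)
  then show ?thesis using assms by (simp add: Vsp_def TT_def)
qed

lemma Vsp_degcomp: "x \<in> Vsp deg \<Longrightarrow> degcomp deg x k \<in> Vsp deg"
  by (auto simp: Vsp_def TT_degcomp degcomp_apply)

lemma Vsp_TT: "x \<in> Vsp deg \<Longrightarrow> x \<in> TT deg" by (simp add: Vsp_def)

lemma rbr_Cons2: "rbr deg (v # w # vs) = br deg v (rbr deg (w # vs))" by simp

lemma rbr_Cons: "us \<noteq> [] \<Longrightarrow> rbr deg (v # us) = br deg v (rbr deg us)"
  by (cases us) auto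

lemma rbr_supp:
  "set vs \<subseteq> Vsp deg \<Longrightarrow> vs \<noteq> [] \<Longrightarrow>
    finite {w. rbr deg vs w \<noteq> 0} \<and> (\<forall>w. rbr deg vs w \<noteq> 0 \<longrightarrow> length w = length vs)"
proof (induction deg vs rule: rbr.induct)
  case (1 deg) then show ?case by simp
next
  case (2 deg v) then show ?case by (auto simp: Vsp_fsupp Vsp_def)
next
  case (3 deg v w vs)
  let ?R = "rbr deg (w # vs)"
  from 3 have IH: "finite {u. ?R u \<noteq> 0}" "\<And>u. ?R u \<noteq> 0 \<Longrightarrow> length u = length (w#vs)" by auto
  have v: "v \<in> Vsp deg" using 3 by auto
  have "finite {u. br deg v ?R u \<noteq> 0}"
    by (rule finite_supp_br[OF Vsp_fsupp[OF v] IH(1)])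
  moreover have "length u = length (v # w # vs)" if nz: "br deg v ?R u \<noteq> 0" for u
  proof -
    obtain a b where "u = a @ b" "(v a \<noteq> 0 \<and> ?R b \<noteq> 0) \<or> (?R a \<noteq> 0 \<and> v b \<noteq> 0)"
      using br_supp[OF nz] by blast
    then show ?thesis using IH(2) v by (auto simp: Vsp_def)
  qed
  ultimately show ?case by simp
qed

lemma Vsp_Lhat: "x \<in> Vsp deg \<Longrightarrow> x \<in> Lhat deg"
proof -
  assume x: "x \<in> Vsp deg"
  have "lencomp x n \<in> Ln deg n" for n
  proof (cases "n = 1")
    case True
    have "lencomp x n = rbr deg [x]" using x True by (auto simp: fun_eq_iff lencomp_apply Vsp_def)
    then show ?thesis using x True unfolding Ln_def
      by (auto intro!: lspan_base exI[of _ "[x]"])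
  next
    case False
    have "lencomp x n = 0" using x False by (auto simp: fun_eq_iff lencomp_apply Vsp_def)
    then show ?thesis by (simp add: Ln_def lspan_zero)
  qed
  then show ?thesis using x by (simp add: Lhat_def Vsp_def)
qed

lemma rbr_Ln: "set vs \<subseteq> Vsp deg \<Longrightarrow> rbr deg vs \<in> Ln deg (length vs)"
  unfolding Ln_def by (auto intro!: lspan_base)

lemma Lhat_zero: "0 \<in> Lhat deg"
  by (simp add: Lhat_def TT_zero Ln_def lspan_zero)

lemma rbr_Lhat: "set vs \<subseteq> Vsp deg \<Longrightarrow> rbr deg vs \<in> Lhat deg"
proof (cases "vs = []")
  case True then show ?thesis by (simp add: Lhat_zero)
next
  case False
  assume vs: "set vs \<subseteq> Vsp deg"
  note S = rbr_supp[OF vs False]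
  have "lencomp (rbr deg vs) n \<in> Ln deg n" for n
  proof (cases "n = length vs")
    case True
    then have "lencomp (rbr deg vs) n = rbr deg vs" using S by (auto simp: fun_eq_iff lencomp_apply)
    then show ?thesis using rbr_Ln[OF vs] True by simp
  next
    case False
    then have "lencomp (rbr deg vs) n = 0" using S by (auto simp: fun_eq_iff lencomp_apply)
    then show ?thesis by (simp add: Ln_def lspan_zero)
  qed
  then show ?thesis using S by (simp add: Lhat_def TT_fsupp)
qed

lemma Lhat_add: "x \<in> Lhat deg \<Longrightarrow> y \<in> Lhat deg \<Longrightarrow> x + y \<in> Lhat deg"
  by (auto simp: Lhat_def TT_add lencomp_add Ln_def intro: lspan_add)
lemma Lhat_smul: "x \<in> Lhat deg \<Longrightarrow> smul c x \<in> Lhat deg"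
  by (auto simp: Lhat_def TT_smul lencomp_smul Ln_def intro: lspan_smul)
lemma Lhat_minus: "x \<in> Lhat deg \<Longrightarrow> y \<in> Lhat deg \<Longrightarrow> x - y \<in> Lhat deg"
  unfolding minus_smul by (intro Lhat_add Lhat_smul)
lemma Lhat_sum: "(\<forall>i\<in>S. f i \<in> Lhat deg) \<Longrightarrow> (\<Sum>i\<in>S. f i) \<in> Lhat deg"
proof (induction S rule: infinite_finite_induct)
  case (infinite A) then show ?case by (metis sum.infinite Lhat_zero)
next
  case empty then show ?case by (simp only: sum.empty Lhat_zero)
next
  case (insert x F)
  have e: "sum f (insert x F) = f x + sum f F" by (rule sum.insert[OF insert.hyps])
  show ?case unfolding e using insert by (intro Lhat_add) auto
qed
lemma Lhat_lencomp: "x \<in> Lhat deg \<Longrightarrow> lencomp x n \<in> Lhat deg"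
  by (auto simp: Lhat_def TT_lencomp lencomp_lencomp Ln_def intro: lspan_zero)
lemma lspan_Lhat: "z \<in> lspan G \<Longrightarrow> G \<subseteq> Lhat deg \<Longrightarrow> z \<in> Lhat deg"
  by (induction z rule: lspan.induct) (auto intro: Lhat_zero Lhat_add Lhat_smul)
lemma Lhat_TT: "x \<in> Lhat deg \<Longrightarrow> x \<in> TT deg" by (simp add: Lhat_def)

lemma sum_delta_deg:
  fixes x :: "'b tens" and g :: "int \<Rightarrow> rat"
  assumes "finite D" "x t \<noteq> 0 \<Longrightarrow> wdeg deg t \<in> D"
  shows "(\<Sum>a\<in>D. (if wdeg deg t = a then x t else 0) * g a) = x t * g (wdeg deg t)"
proof -
  have "(\<Sum>a\<in>D. (if wdeg deg t = a then x t else 0) * g a) = (\<Sum>a\<in>D. if a = wdeg deg t then x t * g a else 0)"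
    by (rule sum.cong) auto
  also have "\<dots> = (if wdeg deg t \<in> D then x t * g (wdeg deg t) else 0)"
    using assms(1) by (simp add: sum.delta')
  also have "\<dots> = x t * g (wdeg deg t)" using assms(2) by auto
  finally show ?thesis .
qed

lemma degcomp_br:
  assumes fin: "finite (degs deg x)"
  shows "degcomp deg (br deg x y) k = (\<Sum>a\<in>degs deg x. br deg (degcomp deg x a) (degcomp deg y (k - a)))"
proof (rule ext)
  fix w
  let ?D = "degs deg x"
  have inD: "\<And>t. x t \<noteq> 0 \<Longrightarrow> wdeg deg t \<in> ?D" by (auto simp: degs_def)
  have "(\<Sum>a\<in>?D. br deg (degcomp deg x a) (degcomp deg y (k - a))) w
     = (\<Sum>a\<in>?D. \<Sum>i\<le>length w. degcomp deg x a (take i w) * degcomp deg y (k - a) (drop i w)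
      - ksign (wdeg deg (take i w) * wdeg deg (drop i w)) * degcomp deg y (k - a) (take i w) * degcomp deg x a (drop i w))"
    by (simp add: sum_app br_apply)
  also have "\<dots> = (\<Sum>i\<le>length w. \<Sum>a\<in>?D. degcomp deg x a (take i w) * degcomp deg y (k - a) (drop i w)
      - ksign (wdeg deg (take i w) * wdeg deg (drop i w)) * degcomp deg y (k - a) (take i w) * degcomp deg x a (drop i w))"
    by (rule sum.swap)
  also have "\<dots> = (\<Sum>i\<le>length w. if wdeg deg w = k then x (take i w) * y (drop i w)
      - ksign (wdeg deg (take i w) * wdeg deg (drop i w)) * y (take i w) * x (drop i w) else 0)"
  proof (rule sum.cong[OF refl])
    fix i
    let ?t = "take i w" and ?r = "drop i w"
    let ?s = "ksign (wdeg deg ?t * wdeg deg ?r)"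
    have wd: "wdeg deg ?t + wdeg deg ?r = wdeg deg w" by (rule wdeg_take_drop)
    have e1: "(\<Sum>a\<in>?D. degcomp deg x a ?t * degcomp deg y (k - a) ?r)
       = x ?t * (if wdeg deg ?r = k - wdeg deg ?t then y ?r else 0)"
      unfolding degcomp_apply by (rule sum_delta_deg[OF fin inD])
    have e2: "(\<Sum>a\<in>?D. ?s * degcomp deg y (k - a) ?t * degcomp deg x a ?r)
       = (\<Sum>a\<in>?D. (if wdeg deg ?r = a then x ?r else 0) * (?s * (if wdeg deg ?t = k - a then y ?t else 0)))"
      by (rule sum.cong) (auto simp: degcomp_apply)
    also have "\<dots> = x ?r * (?s * (if wdeg deg ?t = k - wdeg deg ?r then y ?t else 0))"
      by (rule sum_delta_deg[OF fin inD])
    finally have e2': "(\<Sum>a\<in>?D. ?s * degcomp deg y (k - a) ?t * degcomp deg x a ?r) = x ?r * (?s * (if wdeg deg ?t = k - wdeg deg ?r then y ?t else 0))" .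
    show "(\<Sum>a\<in>?D. degcomp deg x a ?t * degcomp deg y (k - a) ?r - ?s * degcomp deg y (k - a) ?t * degcomp deg x a ?r)
       = (if wdeg deg w = k then x ?t * y ?r - ?s * y ?t * x ?r else 0)"
      unfolding sum_subtractf e1 e2' using wd by auto
  qed
  also have "\<dots> = degcomp deg (br deg x y) k w"
    by (simp add: degcomp_apply br_apply)
  finally show "degcomp deg (br deg x y) k w = (\<Sum>a\<in>?D. br deg (degcomp deg x a) (degcomp deg y (k - a))) w" by simp
qed

lemma lspan_br2: "z \<in> lspan G \<Longrightarrow> br deg u z \<in> lspan ((\<lambda>g. br deg u g) ` G)"
  by (rule lspan_lin[where f="br deg u"]) (auto simp: br_add2 br_smul2 intro: lspan_base)

lemma lspan_br1: "z \<in> lspan G \<Longrightarrow> br deg z u \<in> lspan ((\<lambda>g. br deg g u) ` G)"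
  by (rule lspan_lin[where f="\<lambda>z. br deg z u"]) (auto simp: br_add1 br_smul1 intro: lspan_base)

lemma degcomp_rbr:
  "set vs \<subseteq> TT deg \<Longrightarrow> degcomp deg (rbr deg vs) k \<in>
     lspan {rbr deg us | us. length us = length vs \<and> (\<forall>i<length vs. \<exists>a. us ! i = degcomp deg (vs ! i) a)}"
proof (induction deg vs arbitrary: k rule: rbr.induct)
  case (1 deg) then show ?case by (metis degcomp_zero lspan_zero rbr.simps(1))
next
  case (2 deg v)
  show ?case by (rule lspan_base) (auto intro!: exI[of _ "[degcomp deg v k]"])
next
  case (3 deg v w vs)
  let ?R = "rbr deg (w # vs)"
  let ?G = "\<lambda>vs. {rbr deg us | us. length us = length vs \<and> (\<forall>i<length vs. \<exists>a. us ! i = degcomp deg (vs ! i) a)}"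
  have fin: "finite (degs deg v)" using 3 by (simp add: TT_def)
  have "degcomp deg (rbr deg (v # w # vs)) k = (\<Sum>a\<in>degs deg v. br deg (degcomp deg v a) (degcomp deg ?R (k - a)))"
    by (simp add: degcomp_br[OF fin])
  also have "\<dots> \<in> lspan (?G (v # w # vs))"
  proof (rule lspan_sum, intro ballI)
    fix a
    have IH: "degcomp deg ?R (k - a) \<in> lspan (?G (w # vs))" using 3 by auto
    have "br deg (degcomp deg v a) (degcomp deg ?R (k - a)) \<in> lspan ((\<lambda>g. br deg (degcomp deg v a) g) ` ?G (w # vs))"
      by (rule lspan_br2[OF IH])
    moreover have "(\<lambda>g. br deg (degcomp deg v a) g) ` ?G (w # vs) \<subseteq> ?G (v # w # vs)"
    proof
      fix z assume "z \<in> (\<lambda>g. br deg (degcomp deg v a) g) ` ?G (w # vs)"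
      then obtain us where us: "length us = length (w # vs)" "\<forall>i<length (w # vs). \<exists>a. us ! i = degcomp deg ((w # vs) ! i) a"
        and z: "z = br deg (degcomp deg v a) (rbr deg us)" by blast
      have "us \<noteq> []" using us by auto
      then have "z = rbr deg (degcomp deg v a # us)" using z by (simp add: rbr_Cons)
      moreover have "\<forall>i<length (v # w # vs). \<exists>b. (degcomp deg v a # us) ! i = degcomp deg ((v # w # vs) ! i) b"
        using us by (auto simp: nth_Cons split: nat.splits)
      ultimately show "z \<in> ?G (v # w # vs)" using us
        by (intro CollectI exI[of _ "degcomp deg v a # us"]) auto
    qed
    ultimately show "br deg (degcomp deg v a) (degcomp deg ?R (k - a)) \<in> lspan (?G (v # w # vs))"
      by (rule lspan_mono[rotated])
  qed
  finally show ?case .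
qed

lemma lspan_degcomp:
  "z \<in> lspan G \<Longrightarrow> (\<And>g k. g \<in> G \<Longrightarrow> degcomp deg g k \<in> lspan H) \<Longrightarrow> degcomp deg z k \<in> lspan H"
  by (rule lspan_lin[where f="\<lambda>z. degcomp deg z k"]) (auto simp: degcomp_add degcomp_smul)

lemma set_nth_subset: "(\<forall>i<length us. us ! i \<in> A) \<Longrightarrow> set us \<subseteq> A"
  by (auto simp: set_conv_nth)

lemma Ln_degcomp: "z \<in> Ln deg n \<Longrightarrow> degcomp deg z k \<in> Ln deg n"
  unfolding Ln_def
proof (erule lspan_degcomp)
  fix g k assume "g \<in> {rbr deg vs |vs. length vs = n \<and> set vs \<subseteq> Vsp deg}"
  then obtain vs where g: "g = rbr deg vs" "length vs = n" "set vs \<subseteq> Vsp deg" by blast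
  have "set vs \<subseteq> TT deg" using g(3) Vsp_TT by blast
  from degcomp_rbr[OF this, of k]
  have "degcomp deg g k \<in> lspan {rbr deg us |us. length us = length vs \<and> (\<forall>i<length vs. \<exists>a. us ! i = degcomp deg (vs ! i) a)}"
    using g by simp
  moreover have "{rbr deg us |us. length us = length vs \<and> (\<forall>i<length vs. \<exists>a. us ! i = degcomp deg (vs ! i) a)}
     \<subseteq> {rbr deg vs |vs. length vs = n \<and> set vs \<subseteq> Vsp deg}"
  proof clarify
    fix us assume us: "length us = length vs" "\<forall>i<length vs. \<exists>a. us ! i = degcomp deg (vs ! i) a"
    have "\<forall>i<length us. us ! i \<in> Vsp deg"
      using us g(3) by (metis Vsp_degcomp nth_mem subsetD)
    then show "\<exists>vs'. rbr deg us = rbr deg vs' \<and> length vs' = n \<and> set vs' \<subseteq> Vsp deg"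
      using us g by (auto intro!: set_nth_subset)
  qed
  ultimately show "degcomp deg g k \<in> lspan {rbr deg vs |vs. length vs = n \<and> set vs \<subseteq> Vsp deg}"
    by (rule lspan_mono[rotated])
qed

lemma Lhat_degcomp: "x \<in> Lhat deg \<Longrightarrow> degcomp deg x k \<in> Lhat deg"
  by (auto simp: Lhat_def TT_degcomp degcomp_lencomp[symmetric] Ln_degcomp)

definition tri :: "nat \<Rightarrow> nat \<Rightarrow> nat" where "tri q n = (n - 1) * n * q div 2"

lemma tri_Suc: "tri q (Suc n) = tri q n + n * q"
proof (cases n)
  case 0 then show ?thesis by (simp add: tri_def)
next
  case (Suc m)
  have "Suc m * Suc (Suc m) * q = m * Suc m * q + 2 * (Suc m * q)" by (simp add: algebra_simps)
  then show ?thesis using Suc by (simp add: tri_def)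
qed

lemma tri_mono: "n \<le> n' \<Longrightarrow> tri q n \<le> tri q n'"
  by (induction n' rule: dec_induct) (auto simp: tri_Suc)

lemma tri_unique:
  assumes "tri q n + p = tri q n' + p'" "p < n * q" "p' < n' * q"
  shows "n = n' \<and> p = p'"
proof -
  have "\<not> n < n'" if "tri q n + p = tri q n' + p'" "p < n * q" for n n' p p'
  proof
    assume "n < n'"
    then have "tri q (Suc n) \<le> tri q n'" by (intro tri_mono) simp
    then show False using that by (simp add: tri_Suc)
  qed
  then have "n = n'" using assms by (metis linorder_neqE_nat)
  then show ?thesis using assms by simp
qed

lemma tri_exists:
  assumes "q \<ge> 1" "t \<ge> 1"
  shows "\<exists>n p. 1 \<le> n \<and> p < n * q \<and> t = tri q n + p + 1"
  using assms(2)
proof (induction t rule: dec_induct)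
  case base then show ?case using assms(1) by (intro exI[of _ 1] exI[of _ 0]) (auto simp: tri_def)
next
  case (step t)
  then obtain n p where np: "1 \<le> n" "p < n * q" "t = tri q n + p + 1" by blast
  show ?case
  proof (cases "Suc p < n * q")
    case True then show ?thesis using np by (intro exI[of _ n] exI[of _ "Suc p"]) auto
  next
    case False
    then have "Suc p = n * q" using np by simp
    then show ?thesis using np assms(1)
      by (intro exI[of _ "Suc n"] exI[of _ 0]) (auto simp: tri_Suc)
  qed
qed

lemma Ffilt_eq:
  assumes "1 \<le> n" "p < n * q"
  shows "Ffilt deg Vf q (tri q n + p + 1) = Fnp deg Vf q n p"
proof -
  have "(\<exists>n' p'. 1 \<le> n' \<and> p' < n' * q \<and> tri q n + p + 1 = (n' - 1) * n' * q div 2 + p' + 1 \<and> x \<in> Fnp deg Vf q n' p')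
     \<longleftrightarrow> x \<in> Fnp deg Vf q n p" for x
  proof
    assume "\<exists>n' p'. 1 \<le> n' \<and> p' < n' * q \<and> tri q n + p + 1 = (n' - 1) * n' * q div 2 + p' + 1 \<and> x \<in> Fnp deg Vf q n' p'"
    then obtain n' p' where "p' < n' * q" "tri q n + p = tri q n' + p'" "x \<in> Fnp deg Vf q n' p'"
      by (auto simp: tri_def)
    with tri_unique[OF this(2) assms(2) this(1)] show "x \<in> Fnp deg Vf q n p" by simp
  next
    assume "x \<in> Fnp deg Vf q n p"
    then show "\<exists>n' p'. 1 \<le> n' \<and> p' < n' * q \<and> tri q n + p + 1 = (n' - 1) * n' * q div 2 + p' + 1 \<and> x \<in> Fnp deg Vf q n' p'"
      using assms by (auto simp: tri_def)
  qed
  then show ?thesis by (auto simp: Ffilt_def)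
qed

lemma Ffilt_elim:
  assumes "x \<in> Ffilt deg Vf q t"
  obtains n p where "1 \<le> n" "p < n * q" "t = tri q n + p + 1" "x \<in> Fnp deg Vf q n p"
  using assms by (auto simp: Ffilt_def tri_def)

locale filt =
  fixes deg :: "'b \<Rightarrow> int" and Vf :: "nat \<Rightarrow> 'b tens set" and q :: nat
  assumes Vf0: "Vf 0 = Vsp deg"
    and Vf_dec: "\<forall>\<alpha><q. Vf (Suc \<alpha>) \<subseteq> Vf \<alpha>"
    and Vfq: "Vf q = {0}"
    and Vf_graded: "\<forall>\<alpha>\<le>q. graded_subspace_V deg (Vf \<alpha>)"
begin

lemma q_pos: "q \<ge> 1"
proof (rule ccontr)
  assume "\<not> q \<ge> 1"
  then have "q = 0" by simp
  then have "Vsp deg = {0}" using Vf0 Vfq by simp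
  define e :: "'b tens" where "e = (\<lambda>w. if w = [undefined] then 1 else 0)"
  have "{w. e w \<noteq> 0} = {[undefined]}" by (auto simp: e_def)
  then have "e \<in> TT deg" by (intro TT_fsupp) simp
  then have "e \<in> Vsp deg" by (auto simp: Vsp_def e_def)
  moreover have "e \<noteq> 0" by (auto simp: e_def fun_eq_iff)
  ultimately show False using \<open>Vsp deg = {0}\<close> by simp
qed

lemma Vf_Vsp: "\<alpha> \<le> q \<Longrightarrow> x \<in> Vf \<alpha> \<Longrightarrow> x \<in> Vsp deg"
  using Vf_graded by (auto simp: graded_subspace_V_def)

lemma Vf_degcomp: "\<alpha> \<le> q \<Longrightarrow> x \<in> Vf \<alpha> \<Longrightarrow> degcomp deg x k \<in> Vf \<alpha>"
  using Vf_graded by (auto simp: graded_subspace_V_def)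

abbreviation "Gnp n p \<equiv> {rbr deg vs | vs. length vs = n \<and>
      (\<exists>as. length as = n \<and> (\<forall>i<n. as ! i \<le> q \<and> vs ! i \<in> Vf (as ! i)) \<and> sum_list as = p)}"

lemma Lnp_eq: "Lnp deg Vf q n p = lspan (Gnp n p)" by (simp add: Lnp_def)

lemma Gnp_degcomp: "g \<in> Gnp n p \<Longrightarrow> degcomp deg g k \<in> lspan (Gnp n p)"
proof -
  assume "g \<in> Gnp n p"
  then obtain vs as where g: "g = rbr deg vs" "length vs = n" "length as = n"
     "\<forall>i<n. as ! i \<le> q \<and> vs ! i \<in> Vf (as ! i)" "sum_list as = p" by blast
  have "set vs \<subseteq> TT deg" using g(2,4) Vf_Vsp Vsp_TT by (metis in_set_conv_nth subsetI)
  from degcomp_rbr[OF this, of k]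
  have "degcomp deg g k \<in> lspan {rbr deg us |us. length us = length vs \<and> (\<forall>i<length vs. \<exists>a. us ! i = degcomp deg (vs ! i) a)}"
    using g by simp
  moreover have "{rbr deg us |us. length us = length vs \<and> (\<forall>i<length vs. \<exists>a. us ! i = degcomp deg (vs ! i) a)}
     \<subseteq> Gnp n p"
  proof clarify
    fix us assume us: "length us = length vs" "\<forall>i<length vs. \<exists>a. us ! i = degcomp deg (vs ! i) a"
    have "\<forall>i<n. as ! i \<le> q \<and> us ! i \<in> Vf (as ! i)"
      using us g Vf_degcomp by metis
    then show "\<exists>vs'. rbr deg us = rbr deg vs' \<and> length vs' = n \<and>
      (\<exists>as. length as = n \<and> (\<forall>i<n. as ! i \<le> q \<and> vs' ! i \<in> Vf (as ! i)) \<and> sum_list as = p)"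
      using us g by blast
  qed
  ultimately show "degcomp deg g k \<in> lspan (Gnp n p)"
    by (rule lspan_mono[rotated])
qed

lemma Lnp_degcomp: "z \<in> Lnp deg Vf q n p \<Longrightarrow> degcomp deg z k \<in> Lnp deg Vf q n p"
  unfolding Lnp_eq by (erule lspan_degcomp) (rule Gnp_degcomp)

lemma Gnp_Vsp: "rbr deg vs \<in> Gnp n p \<Longrightarrow> True" by simp

lemma Gnp_elim:
  assumes "g \<in> Gnp n p"
  obtains vs where "g = rbr deg vs" "length vs = n" "set vs \<subseteq> Vsp deg"
proof -
  from assms obtain vs as where g: "g = rbr deg vs" "length vs = n" "length as = n"
     "\<forall>i<n. as ! i \<le> q \<and> vs ! i \<in> Vf (as ! i)" "sum_list as = p" by blast
  have "set vs \<subseteq> Vsp deg" using g(2,4) Vf_Vsp by (metis in_set_conv_nth subsetI)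
  then show ?thesis using g that by blast
qed

lemma Lnp_Ln: "z \<in> Lnp deg Vf q n p \<Longrightarrow> z \<in> Ln deg n"
  unfolding Lnp_eq Ln_def
  by (erule lspan_mono[rotated]) (auto elim!: Gnp_elim)

lemma Gnp_Suc: "Gnp n (Suc p) \<subseteq> Gnp n p"
proof
  fix g assume "g \<in> Gnp n (Suc p)"
  then obtain vs as where g: "length vs = n" "length as = n"
     "\<forall>i<n. as ! i \<le> q \<and> vs ! i \<in> Vf (as ! i)" "sum_list as = Suc p" and gv: "g = rbr deg vs" by blast
  have "\<exists>x\<in>set as. x \<noteq> 0" using g(4) by (metis sum_list_eq_0_iff nat.simps(3))
  then obtain i where i: "i < n" "as ! i \<noteq> 0" using g(2) by (metis in_set_conv_nth)
  define as' where "as' = as[i := as ! i - 1]"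
  have "length as' = n" using g by (simp add: as'_def)
  moreover have "sum_list as' = p"
    using i g by (simp add: as'_def sum_list_update)
  moreover have "\<forall>j<n. as' ! j \<le> q \<and> vs ! j \<in> Vf (as' ! j)"
  proof (intro allI impI)
    fix j assume j: "j < n"
    show "as' ! j \<le> q \<and> vs ! j \<in> Vf (as' ! j)"
    proof (cases "j = i")
      case True
      have "as ! i - 1 < q" "Suc (as ! i - 1) = as ! i" using g(3) i by (auto dest: spec[of _ i])
      then have "Vf (as ! i) \<subseteq> Vf (as ! i - 1)" using Vf_dec by metis
      then show ?thesis using True g(2,3) j i by (auto simp: as'_def)
    next
      case False then show ?thesis using g j by (auto simp: as'_def)
    qed
  qed
  ultimately show "g \<in> Gnp n p"
    using g gv by blast
qed

lemma Lnp_Suc: "z \<in> Lnp deg Vf q n (Suc p) \<Longrightarrow> z \<in> Lnp deg Vf q n p"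
  unfolding Lnp_eq by (erule lspan_mono[rotated]) (rule Gnp_Suc)


lemma Ln1_Lnp: "z \<in> Ln deg 1 \<Longrightarrow> z \<in> Lnp deg Vf q 1 0"
  unfolding Lnp_eq Ln_def
proof (erule lspan_mono[rotated], clarify)
  fix vs :: "'b tens list" assume vs: "length vs = 1" "set vs \<subseteq> Vsp deg"
  then obtain v where "vs = [v]" by (metis One_nat_def length_0_conv length_Suc_conv)
  then show "\<exists>vs'. rbr deg vs = rbr deg vs' \<and> length vs' = 1 \<and>
      (\<exists>as. length as = 1 \<and> (\<forall>i<1. as ! i \<le> q \<and> vs' ! i \<in> Vf (as ! i)) \<and> sum_list as = 0)"
    using vs Vf0 by (intro exI[of _ vs] conjI exI[of _ "[0]"]) auto
qed

lemma Fnp_Lhat: "x \<in> Fnp deg Vf q n p \<Longrightarrow> x \<in> Lhat deg" by (simp add: Fnp_def)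

lemma Fnp_zero: "0 \<in> Fnp deg Vf q n p"
  by (simp add: Fnp_def Lhat_zero Lnp_def lspan_zero)

lemma Fnp_add: "x \<in> Fnp deg Vf q n p \<Longrightarrow> y \<in> Fnp deg Vf q n p \<Longrightarrow> x + y \<in> Fnp deg Vf q n p"
  by (auto simp: Fnp_def Lhat_add lencomp_add Lnp_def intro: lspan_add)

lemma Fnp_smul: "x \<in> Fnp deg Vf q n p \<Longrightarrow> smul c x \<in> Fnp deg Vf q n p"
  by (auto simp: Fnp_def Lhat_smul lencomp_smul Lnp_def intro: lspan_smul)

lemma Fnp_degcomp: "x \<in> Fnp deg Vf q n p \<Longrightarrow> degcomp deg x k \<in> Fnp deg Vf q n p"
  by (auto simp: Fnp_def Lhat_degcomp degcomp_lencomp[symmetric] Lnp_degcomp degcomp_apply)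

lemma Fnp_Suc: "x \<in> Fnp deg Vf q n (Suc p) \<Longrightarrow> x \<in> Fnp deg Vf q n p"
  by (auto simp: Fnp_def Lnp_Suc)

lemma Fnp_next: "x \<in> Fnp deg Vf q (Suc n) 0 \<Longrightarrow> x \<in> Fnp deg Vf q n p"
proof -
  assume x: "x \<in> Fnp deg Vf q (Suc n) 0"
  then have "lencomp x n = 0" by (auto simp: Fnp_def fun_eq_iff lencomp_apply)
  then show ?thesis using x by (auto simp: Fnp_def Lnp_def lspan_zero)
qed

lemma Ffilt_is_Fnp:
  assumes "t \<ge> 1"
  obtains n p where "1 \<le> n" "p < n * q" "t = tri q n + p + 1" "Ffilt deg Vf q t = Fnp deg Vf q n p"
  using tri_exists[OF q_pos assms] Ffilt_eq by blast

lemma Ffilt_pos: "x \<in> Ffilt deg Vf q t \<Longrightarrow> t \<ge> 1"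
  by (auto elim: Ffilt_elim)

lemma Ffilt_Lhat: "x \<in> Ffilt deg Vf q t \<Longrightarrow> x \<in> Lhat deg"
  by (auto elim: Ffilt_elim simp: Fnp_Lhat)

lemma Ffilt_zero: "t \<ge> 1 \<Longrightarrow> 0 \<in> Ffilt deg Vf q t"
  by (metis Ffilt_is_Fnp Fnp_zero)

lemma Ffilt_add: "x \<in> Ffilt deg Vf q t \<Longrightarrow> y \<in> Ffilt deg Vf q t \<Longrightarrow> x + y \<in> Ffilt deg Vf q t"
  by (metis Ffilt_is_Fnp Ffilt_pos Fnp_add)

lemma Ffilt_smul: "x \<in> Ffilt deg Vf q t \<Longrightarrow> smul c x \<in> Ffilt deg Vf q t"
  by (metis Ffilt_is_Fnp Ffilt_pos Fnp_smul)

lemma Ffilt_minus: "x \<in> Ffilt deg Vf q t \<Longrightarrow> y \<in> Ffilt deg Vf q t \<Longrightarrow> x - y \<in> Ffilt deg Vf q t"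
  unfolding minus_smul by (intro Ffilt_add Ffilt_smul)

lemma Ffilt_degcomp: "x \<in> Ffilt deg Vf q t \<Longrightarrow> degcomp deg x k \<in> Ffilt deg Vf q t"
  by (metis Ffilt_is_Fnp Ffilt_pos Fnp_degcomp)

lemma Ffilt_sum: "t \<ge> 1 \<Longrightarrow> (\<forall>i\<in>S. f i \<in> Ffilt deg Vf q t) \<Longrightarrow> (\<Sum>i\<in>S. f i) \<in> Ffilt deg Vf q t"
proof (induction S rule: infinite_finite_induct)
  case (infinite A) then show ?case by (metis sum.infinite Ffilt_zero)
next
  case empty then show ?case by (metis sum.empty Ffilt_zero)
next
  case (insert x F)
  have e: "sum f (insert x F) = f x + sum f F" by (rule sum.insert[OF insert.hyps])
  show ?case unfolding e using insert by (intro Ffilt_add) auto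
qed

lemma Ffilt_Suc: "t \<ge> 1 \<Longrightarrow> Ffilt deg Vf q (Suc t) \<subseteq> Ffilt deg Vf q t"
proof
  fix x assume t: "t \<ge> 1" and x: "x \<in> Ffilt deg Vf q (Suc t)"
  from x obtain n p where np: "1 \<le> n" "p < n * q" "Suc t = tri q n + p + 1" "x \<in> Fnp deg Vf q n p"
    by (rule Ffilt_elim)
  show "x \<in> Ffilt deg Vf q t"
  proof (cases p)
    case (Suc p')
    then have "Ffilt deg Vf q t = Fnp deg Vf q n p'" using np Ffilt_eq[where n=n and p=p' and q=q and deg=deg and Vf=Vf] by simp
    then show ?thesis using np Suc Fnp_Suc by simp
  next
    case 0
    have "tri q 1 = 0" by (simp add: tri_def)
    then have "n \<noteq> 1" using np t 0 by auto
    then obtain m where m: "n = Suc m" "m \<ge> 1" using np by (cases n) auto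
    then have "m * q \<ge> 1" using q_pos by simp
    then have "t = tri q m + (m * q - 1) + 1" using np 0 m by (simp add: tri_Suc)
    then have "Ffilt deg Vf q t = Fnp deg Vf q m (m * q - 1)"
      using Ffilt_eq[where n=m and p="m * q - 1" and q=q and deg=deg and Vf=Vf] m \<open>m * q \<ge> 1\<close> by simp
    then show ?thesis using np 0 m Fnp_next by simp
  qed
qed

lemma Ffilt_anti: assumes "1 \<le> t" "t \<le> t'" shows "Ffilt deg Vf q t' \<subseteq> Ffilt deg Vf q t"
  using assms(2)
proof (induction t' rule: dec_induct)
  case base then show ?case by simp
next
  case (step m) then show ?case using Ffilt_Suc[of m] assms(1) by auto
qed

lemma Lhat_Ffilt1: "x \<in> Lhat deg \<Longrightarrow> x \<in> Ffilt deg Vf q 1"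
proof -
  assume x: "x \<in> Lhat deg"
  have e: "Ffilt deg Vf q 1 = Fnp deg Vf q 1 0"
    using Ffilt_eq[where n=1 and p=0 and q=q and deg=deg and Vf=Vf] q_pos by (simp add: tri_def)
  have "lencomp x 0 \<in> Ln deg 0" using x by (simp add: Lhat_def)
  then have "lencomp x 0 \<in> lspan {0}" by (simp add: Ln_def)
  then have "lencomp x 0 = 0" by (rule lspan_zero_set)
  then have z: "x [] = 0" by (metis lencomp_apply list.size(3) zero_fun_apply)
  have "lencomp x 1 \<in> Ln deg 1" using x by (simp add: Lhat_def)
  then have "lencomp x 1 \<in> Lnp deg Vf q 1 0" by (rule Ln1_Lnp)
  then show ?thesis unfolding e using x z by (auto simp: Fnp_def)
qed

lemma Ffilt_vanish:
  assumes "x \<in> Ffilt deg Vf q t" "tri q (Suc L) < t" "length w \<le> L"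
  shows "x w = 0"
proof -
  from assms(1) obtain n p where np: "1 \<le> n" "p < n * q" "t = tri q n + p + 1" "x \<in> Fnp deg Vf q n p"
    by (rule Ffilt_elim)
  have "t \<le> tri q (Suc n)" using np by (simp add: tri_Suc)
  then have "\<not> Suc n \<le> Suc L" using assms(2) tri_mono[of "Suc n" "Suc L" q] by auto
  then have "length w < n" using assms(3) by simp
  then show ?thesis using np by (simp add: Fnp_def)
qed

lemma Ffilt_limit:
  assumes y: "y \<in> Lhat deg" and t: "t \<ge> 1"
    and approx: "\<And>L. \<exists>z\<in>Ffilt deg Vf q t. \<forall>w. length w \<le> L \<longrightarrow> y w = z w"
  shows "y \<in> Ffilt deg Vf q t"
proof -
  obtain n p where np: "1 \<le> n" "p < n * q" "Ffilt deg Vf q t = Fnp deg Vf q n p"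
    using Ffilt_is_Fnp[OF t] by metis
  obtain z where z: "z \<in> Fnp deg Vf q n p" "\<forall>w. length w \<le> n \<longrightarrow> y w = z w"
    using approx[of n] np by auto
  have "lencomp y n = lencomp z n" using z by (auto simp: fun_eq_iff lencomp_apply)
  then have "y \<in> Fnp deg Vf q n p" using z y by (auto simp: Fnp_def)
  then show ?thesis using np by simp
qed

end

lemma dplus_app: "((\<theta> :: 'b tens \<Rightarrow> 'b tens) + \<eta>) x = \<theta> x + \<eta> x" by simp
lemma dminus_app: "((\<theta> :: 'b tens \<Rightarrow> 'b tens) - \<eta>) x = \<theta> x - \<eta> x" by simp
lemma dzero_app: "(0 :: 'b tens \<Rightarrow> 'b tens) x = 0" by simp

lemma homog_zero[simp]: "homog deg k 0" by (simp add: homog_def)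
lemma homog_add: "homog deg k x \<Longrightarrow> homog deg k y \<Longrightarrow> homog deg k (x + y)"
  unfolding homog_def
proof (intro allI impI)
  fix w assume a: "\<forall>w. x w \<noteq> 0 \<longrightarrow> wdeg deg w = k" "\<forall>w. y w \<noteq> 0 \<longrightarrow> wdeg deg w = k" "(x + y) w \<noteq> 0"
  then show "wdeg deg w = k" by (cases "x w = 0") auto
qed
lemma homog_smul: "homog deg k x \<Longrightarrow> homog deg k (smul c x)"
  by (auto simp: homog_def)
lemma homog_minus: "homog deg k x \<Longrightarrow> homog deg k y \<Longrightarrow> homog deg k (x - y)"
  unfolding minus_smul by (intro homog_add homog_smul)
lemma homog_unique: "homog deg k x \<Longrightarrow> homog deg j x \<Longrightarrow> k \<noteq> j \<Longrightarrow> x = 0"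
  by (auto simp: homog_def fun_eq_iff)
lemma homog_degcomp: "homog deg j (degcomp deg x j)"
  by (simp add: homog_def degcomp_apply)
lemma degcomp_homog_same: "homog deg j x \<Longrightarrow> degcomp deg x j = x"
  by (auto simp: homog_def degcomp_apply fun_eq_iff)
lemma degcomp_homog_other: "homog deg j x \<Longrightarrow> k \<noteq> j \<Longrightarrow> degcomp deg x k = 0"
  by (auto simp: homog_def degcomp_apply fun_eq_iff)

context
  fixes deg :: "'b \<Rightarrow> int" and k :: int and \<theta> :: "'b tens \<Rightarrow> 'b tens"
  assumes der: "is_der deg k \<theta>"
begin

lemma der_out: "x \<notin> Lhat deg \<Longrightarrow> \<theta> x = 0" using der by (simp add: is_der_def)
lemma der_Lhat: "x \<in> Lhat deg \<Longrightarrow> \<theta> x \<in> Lhat deg" using der by (simp add: is_der_def)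
lemma der_add: "x \<in> Lhat deg \<Longrightarrow> y \<in> Lhat deg \<Longrightarrow> \<theta> (x + y) = \<theta> x + \<theta> y"
  using der by (simp add: is_der_def)
lemma der_smul: "x \<in> Lhat deg \<Longrightarrow> \<theta> (smul c x) = smul c (\<theta> x)"
  using der by (simp add: is_der_def)
lemma der_homog: "x \<in> Lhat deg \<Longrightarrow> homog deg j x \<Longrightarrow> homog deg (j + k) (\<theta> x)"
  using der by (simp add: is_der_def)
lemma der_br: "x \<in> Lhat deg \<Longrightarrow> y \<in> Lhat deg \<Longrightarrow> homog deg j x \<Longrightarrow>
   \<theta> (br deg x y) = br deg (\<theta> x) y + smul (ksign (k * j)) (br deg x (\<theta> y))"
  using der by (simp add: is_der_def)
lemma der_zero: "\<theta> 0 = 0"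
proof -
  have "\<theta> (smul 0 0) = smul 0 (\<theta> 0)" by (rule der_smul[OF Lhat_zero])
  then show ?thesis by simp
qed
lemma der_minus: "x \<in> Lhat deg \<Longrightarrow> y \<in> Lhat deg \<Longrightarrow> \<theta> (x - y) = \<theta> x - \<theta> y"
  unfolding minus_smul by (simp add: der_add Lhat_smul der_smul)
lemma der_sum: "(\<forall>i\<in>S. f i \<in> Lhat deg) \<Longrightarrow> \<theta> (\<Sum>i\<in>S. f i) = (\<Sum>i\<in>S. \<theta> (f i))"
proof (induction S rule: infinite_finite_induct)
  case (infinite A) then show ?case by (metis sum.infinite der_zero)
next
  case empty then show ?case by (metis sum.empty der_zero)
next
  case (insert x F)
  have e: "sum f (insert x F) = f x + sum f F" by (rule sum.insert[OF insert.hyps])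
  have e2: "(\<Sum>i\<in>insert x F. \<theta> (f i)) = \<theta> (f x) + (\<Sum>i\<in>F. \<theta> (f i))" by (rule sum.insert[OF insert.hyps])
  show ?case unfolding e e2 using insert by (subst der_add) (auto intro: Lhat_sum)
qed

lemma der_degs: "x \<in> Lhat deg \<Longrightarrow> \<theta> x w \<noteq> 0 \<Longrightarrow> wdeg deg w \<in> (\<lambda>j. j + k) ` degs deg x"
proof -
  assume x: "x \<in> Lhat deg" and nz: "\<theta> x w \<noteq> 0"
  have fin: "finite (degs deg x)" using x by (simp add: Lhat_def TT_def)
  have "\<theta> x = \<theta> (\<Sum>j\<in>degs deg x. degcomp deg x j)" using degcomp_decomp[OF fin] by simp
  also have "\<dots> = (\<Sum>j\<in>degs deg x. \<theta> (degcomp deg x j))"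
    using x by (intro der_sum) (auto intro: Lhat_degcomp)
  finally have "(\<Sum>j\<in>degs deg x. \<theta> (degcomp deg x j) w) \<noteq> 0" using nz by (simp add: sum_app)
  then obtain j where j: "j \<in> degs deg x" "\<theta> (degcomp deg x j) w \<noteq> 0" by (meson sum.neutral)
  have "homog deg (j + k) (\<theta> (degcomp deg x j))"
    using x by (intro der_homog Lhat_degcomp homog_degcomp)
  then have "wdeg deg w = j + k" using j by (simp add: homog_def)
  then show ?thesis using j by auto
qed

end

lemma is_der_zero: "is_der deg k (\<lambda>x. 0)"
  by (simp add: is_der_def Lhat_zero)

lemma is_der_add:
  assumes A: "is_der deg k \<theta>" and B: "is_der deg k \<eta>"
  shows "is_der deg k (\<theta> + \<eta>)"
  unfolding is_der_def
proof (intro conjI allI ballI impI)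
  fix x assume "x \<notin> Lhat deg" then show "(\<theta> + \<eta>) x = 0"
    by (metis dplus_app der_out[OF A] der_out[OF B] add_0)
next
  fix x assume "x \<in> Lhat deg" then show "(\<theta> + \<eta>) x \<in> Lhat deg"
    unfolding dplus_app by (intro Lhat_add der_Lhat[OF A] der_Lhat[OF B])
next
  fix x y assume "x \<in> Lhat deg" "y \<in> Lhat deg"
  then show "(\<theta> + \<eta>) (x + y) = (\<theta> + \<eta>) x + (\<theta> + \<eta>) y"
    unfolding dplus_app by (simp add: der_add[OF A] der_add[OF B] ac_simps)
next
  fix c x assume "x \<in> Lhat deg"
  then show "(\<theta> + \<eta>) (smul c x) = smul c ((\<theta> + \<eta>) x)"
    unfolding dplus_app by (simp add: der_smul[OF A] der_smul[OF B] smul_add)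
next
  fix j x assume "x \<in> Lhat deg" "homog deg j x"
  then show "homog deg (j + k) ((\<theta> + \<eta>) x)"
    unfolding dplus_app by (intro homog_add der_homog[OF A] der_homog[OF B])
next
  fix j x y assume "x \<in> Lhat deg" "y \<in> Lhat deg" "homog deg j x"
  then show "(\<theta> + \<eta>) (br deg x y) = br deg ((\<theta> + \<eta>) x) y + smul (ksign (k * j)) (br deg x ((\<theta> + \<eta>) y))"
    unfolding dplus_app by (simp add: der_br[OF A] der_br[OF B] br_add1 br_add2 smul_add ac_simps)
qed

lemma is_der_smul:
  assumes A: "is_der deg k \<theta>"
  shows "is_der deg k (\<lambda>x. smul c (\<theta> x))"
  unfolding is_der_def
proof (intro conjI allI ballI impI)
  fix x assume "x \<notin> Lhat deg" then show "smul c (\<theta> x) = 0"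
    by (metis der_out[OF A] smul_zero)
next
  fix x assume "x \<in> Lhat deg" then show "smul c (\<theta> x) \<in> Lhat deg"
    by (intro Lhat_smul der_Lhat[OF A])
next
  fix x y assume "x \<in> Lhat deg" "y \<in> Lhat deg"
  then show "smul c (\<theta> (x + y)) = smul c (\<theta> x) + smul c (\<theta> y)"
    by (simp add: der_add[OF A] smul_add)
next
  fix e x assume "x \<in> Lhat deg"
  then show "smul c (\<theta> (smul e x)) = smul e (smul c (\<theta> x))"
    by (simp add: der_smul[OF A] smul_smul mult.commute)
next
  fix j x assume "x \<in> Lhat deg" "homog deg j x"
  then show "homog deg (j + k) (smul c (\<theta> x))"
    by (intro homog_smul der_homog[OF A])
next
  fix j x y assume "x \<in> Lhat deg" "y \<in> Lhat deg" "homog deg j x"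
  then show "smul c (\<theta> (br deg x y)) = br deg (smul c (\<theta> x)) y + smul (ksign (k * j)) (br deg x (smul c (\<theta> y)))"
    by (simp add: der_br[OF A] br_smul1 br_smul2 smul_add smul_smul mult.commute)
qed

lemma fun_minus_eq: "(\<theta> :: 'b tens \<Rightarrow> 'b tens) - \<eta> = \<theta> + (\<lambda>x. smul (-1) (\<eta> x))"
  by (simp add: fun_eq_iff)

lemma is_der_minus:
  assumes "is_der deg k \<theta>" "is_der deg k \<eta>"
  shows "is_der deg k (\<theta> - \<eta>)"
  unfolding fun_minus_eq using assms by (intro is_der_add is_der_smul)

definition mul :: "'b tens \<Rightarrow> 'b tens \<Rightarrow> 'b tens" where
  "mul x y = (\<lambda>w. \<Sum>i\<le>length w. x (take i w) * y (drop i w))"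

lemma mul_apply: "mul x y w = (\<Sum>i\<le>length w. x (take i w) * y (drop i w))"
  by (simp add: mul_def)

lemma mul_assoc: fixes x y z :: "'b tens" shows "mul (mul x y) z = mul x (mul y z)"
proof (rule ext)
  fix w :: "'b list"
  let ?n = "length w"
  define F where "F j l = x (take j w) * y (take l (drop j w)) * z (drop (j + l) w)" for j l
  have "mul (mul x y) z w = (\<Sum>i\<le>?n. \<Sum>j\<le>i. x (take j (take i w)) * y (drop j (take i w)) * z (drop i w))"
    by (simp add: mul_apply sum_distrib_right min_absorb1)
  also have "\<dots> = (\<Sum>i\<le>?n. \<Sum>j\<le>i. F j (i - j))"
    by (intro sum.cong refl) (auto simp: F_def min_absorb1 drop_take)
  also have "\<dots> = (\<Sum>(j,l)\<in>{(j,l). j + l \<le> ?n}. F j l)"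
    by (rule sum.triangle_reindex_eq[symmetric])
  also have "{(j,l). j + l \<le> ?n} = Sigma {..?n} (\<lambda>j. {..?n - j})" by auto
  also have "(\<Sum>(j,l)\<in>Sigma {..?n} (\<lambda>j. {..?n - j}). F j l) = (\<Sum>j\<le>?n. \<Sum>l\<le>?n - j. F j l)"
    by (rule sum.Sigma[symmetric]) auto
  also have "\<dots> = mul x (mul y z) w"
    by (simp add: mul_apply sum_distrib_left F_def mult.assoc add.commute)
  finally show "mul (mul x y) z w = mul x (mul y z) w" .
qed

lemma mul_add1: "mul (x + x') y = mul x y + mul x' y"
  by (simp add: fun_eq_iff mul_apply sum.distrib[symmetric] algebra_simps)
lemma mul_add2: "mul x (y + y') = mul x y + mul x y'"
  by (simp add: fun_eq_iff mul_apply sum.distrib[symmetric] algebra_simps)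
lemma mul_minus1: "mul (x - x') y = mul x y - mul x' y"
  by (simp add: fun_eq_iff mul_apply sum_subtractf[symmetric] algebra_simps)
lemma mul_minus2: "mul x (y - y') = mul x y - mul x y'"
  by (simp add: fun_eq_iff mul_apply sum_subtractf[symmetric] algebra_simps)
lemma mul_smul1: "mul (smul c x) y = smul c (mul x y)"
  by (simp add: fun_eq_iff mul_apply sum_distrib_left algebra_simps)
lemma mul_smul2: "mul x (smul c y) = smul c (mul x y)"
  by (simp add: fun_eq_iff mul_apply sum_distrib_left algebra_simps)

lemma homog_mul:
  assumes "homog deg a x" "homog deg b y"
  shows "homog deg (a + b) (mul x y)"
  unfolding homog_def
proof (intro allI impI)
  fix w assume "mul x y w \<noteq> 0"
  then obtain i where "x (take i w) * y (drop i w) \<noteq> 0"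
    unfolding mul_apply by (meson sum.neutral)
  then have "wdeg deg (take i w) = a" "wdeg deg (drop i w) = b" using assms by (auto simp: homog_def)
  then show "wdeg deg w = a + b" using wdeg_take_drop[of deg i w] by simp
qed

lemma br_mul:
  assumes "homog deg a x" "homog deg b y"
  shows "br deg x y = mul x y - smul (ksign (a * b)) (mul y x)"
proof (rule ext)
  fix w
  have "br deg x y w = (\<Sum>i\<le>length w. x (take i w) * y (drop i w) - ksign (a * b) * (y (take i w) * x (drop i w)))"
    unfolding br_apply
  proof (intro sum.cong refl)
    fix i
    show "x (take i w) * y (drop i w) - ksign (wdeg deg (take i w) * wdeg deg (drop i w)) * y (take i w) * x (drop i w)
       = x (take i w) * y (drop i w) - ksign (a * b) * (y (take i w) * x (drop i w))"
    proof (cases "y (take i w) * x (drop i w) = 0")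
      case True then show ?thesis by (simp add: mult.assoc)
    next
      case False
      then have "wdeg deg (take i w) = b" "wdeg deg (drop i w) = a" using assms by (auto simp: homog_def)
      then show ?thesis by (simp add: mult.assoc mult.commute)
    qed
  qed
  also have "\<dots> = (mul x y - smul (ksign (a * b)) (mul y x)) w"
    by (simp add: mul_apply sum_subtractf sum_distrib_left)
  finally show "br deg x y w = (mul x y - smul (ksign (a * b)) (mul y x)) w" .
qed

lemma homog_br:
  assumes "homog deg a x" "homog deg b y"
  shows "homog deg (a + b) (br deg x y)"
proof -
  have m: "homog deg (a + b) (mul y x)" using homog_mul[OF assms(2,1)] by (simp add: add.commute)
  show ?thesis unfolding br_mul[OF assms]
    by (intro homog_minus homog_mul[OF assms] homog_smul m)
qed

lemma jacobi:
  assumes A: "homog deg a x" and B: "homog deg b y" and C: "homog deg c z"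
  shows "br deg x (br deg y z) = br deg (br deg x y) z + smul (ksign (a * b)) (br deg y (br deg x z))"
proof -
  have yz: "homog deg (b + c) (br deg y z)" by (rule homog_br[OF B C])
  have xy: "homog deg (a + b) (br deg x y)" by (rule homog_br[OF A B])
  have xz: "homog deg (a + c) (br deg x z)" by (rule homog_br[OF A C])
  let ?s = ksign
  have s1: "?s (a * (b + c)) = ?s (a*b) * ?s (a*c)" by (simp add: distrib_left ksign_add)
  have s2: "?s ((a + b) * c) = ?s (a*c) * ?s (b*c)" by (simp add: distrib_right ksign_add)
  have s3: "?s (b * (a + c)) = ?s (a*b) * ?s (b*c)" by (simp add: distrib_left ksign_add mult.commute)
  have L: "br deg x (br deg y z) =
     mul x (mul y z) - smul (?s (b*c)) (mul x (mul z y))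
     - smul (?s (a * (b + c))) (mul (mul y z) x) + smul (?s (a * (b + c)) * ?s (b*c)) (mul (mul z y) x)"
    unfolding br_mul[OF A yz] unfolding br_mul[OF B C]
    by (simp add: mul_minus1 mul_minus2 mul_smul1 mul_smul2 smul_smul fun_eq_iff algebra_simps)
  have R1: "br deg (br deg x y) z =
     mul (mul x y) z - smul (?s (a*b)) (mul (mul y x) z)
     - smul (?s ((a + b) * c)) (mul z (mul x y)) + smul (?s ((a + b) * c) * ?s (a*b)) (mul z (mul y x))"
    unfolding br_mul[OF xy C] unfolding br_mul[OF A B]
    by (simp add: mul_minus1 mul_minus2 mul_smul1 mul_smul2 smul_smul fun_eq_iff algebra_simps)
  have R2: "br deg y (br deg x z) =
     mul y (mul x z) - smul (?s (a*c)) (mul y (mul z x))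
     - smul (?s (b * (a + c))) (mul (mul x z) y) + smul (?s (b * (a + c)) * ?s (a*c)) (mul (mul z x) y)"
    unfolding br_mul[OF B xz] unfolding br_mul[OF A C]
    by (simp add: mul_minus1 mul_minus2 mul_smul1 mul_smul2 smul_smul fun_eq_iff algebra_simps)
  show ?thesis
  proof (rule ext)
    fix w
    define P where "P = ?s (a*b)"
    define Q where "Q = ?s (a*c)"
    define S where "S = ?s (b*c)"
    have PP: "P * P = 1" "Q * Q = 1" "S * S = 1" by (simp_all add: P_def Q_def S_def ksign_sq)
    show "br deg x (br deg y z) w = (br deg (br deg x y) z + smul (?s (a * b)) (br deg y (br deg x z))) w"
      unfolding L R1 R2 s1 s2 s3 mul_assoc P_def[symmetric] Q_def[symmetric] S_def[symmetric]
      apply (simp add: algebra_simps)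
      apply (simp add: mult.assoc[symmetric] PP)
      done
  qed
qed

definition Hset :: "('b \<Rightarrow> int) \<Rightarrow> 'b tens set" where
  "Hset deg = {v \<in> Vsp deg. \<exists>a. homog deg a v}"

definition GH :: "('b \<Rightarrow> int) \<Rightarrow> nat \<Rightarrow> 'b tens set" where
  "GH deg n = {rbr deg vs | vs. length vs = n \<and> set vs \<subseteq> Hset deg}"

lemma rbr_homog: "set vs \<subseteq> Hset deg \<Longrightarrow> \<exists>c. homog deg c (rbr deg vs)"
proof (induction deg vs rule: rbr.induct)
  case (1 deg) then show ?case by (metis homog_zero rbr.simps(1))
next
  case (2 deg v) then show ?case by (auto simp: Hset_def)
next
  case (3 deg v w vs)
  then obtain c where c: "homog deg c (rbr deg (w # vs))" by auto
  from 3 obtain a where a: "homog deg a v" by (auto simp: Hset_def)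
  show ?case using homog_br[OF a c] by auto
qed

lemma Hset_Vsp: "set vs \<subseteq> Hset deg \<Longrightarrow> set vs \<subseteq> Vsp deg"
  by (auto simp: Hset_def)

lemma GH_Ln: "GH deg n \<subseteq> Ln deg n"
  unfolding GH_def Ln_def using Hset_Vsp by (blast intro: lspan_base)

lemma rbr_GH: "set vs \<subseteq> Vsp deg \<Longrightarrow> rbr deg vs \<in> lspan (GH deg (length vs))"
proof (induction deg vs rule: rbr.induct)
  case (1 deg) then show ?case by (metis lspan_zero rbr.simps(1))
next
  case (2 deg v)
  have v: "v \<in> Vsp deg" using 2 by simp
  have fin: "finite (degs deg v)" using v by (simp add: Vsp_def TT_def)
  have "v = (\<Sum>a\<in>degs deg v. degcomp deg v a)" by (rule degcomp_decomp[OF fin])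
  also have "\<dots> \<in> lspan (GH deg 1)"
  proof (rule lspan_sum, intro ballI lspan_base)
    fix a
    have "degcomp deg v a \<in> Hset deg" using v by (auto simp: Hset_def Vsp_degcomp intro: homog_degcomp)
    then show "degcomp deg v a \<in> GH deg 1" unfolding GH_def by (intro CollectI exI[of _ "[degcomp deg v a]"]) auto
  qed
  finally show ?case by simp
next
  case (3 deg v w vs)
  let ?R = "rbr deg (w # vs)"
  have v: "v \<in> Vsp deg" using 3 by simp
  have IH: "?R \<in> lspan (GH deg (length (w # vs)))" using 3 by simp
  have fin: "finite (degs deg v)" using v by (simp add: Vsp_def TT_def)
  have "rbr deg (v # w # vs) = br deg (\<Sum>a\<in>degs deg v. degcomp deg v a) ?R"
    using degcomp_decomp[OF fin] by simp
  also have "\<dots> = (\<Sum>a\<in>degs deg v. br deg (degcomp deg v a) ?R)" by (rule br_sum1)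
  also have "\<dots> \<in> lspan (GH deg (length (v # w # vs)))"
  proof (rule lspan_sum, intro ballI)
    fix a
    have va: "degcomp deg v a \<in> Hset deg" using v by (auto simp: Hset_def Vsp_degcomp intro: homog_degcomp)
    have "br deg (degcomp deg v a) ?R \<in> lspan ((\<lambda>g. br deg (degcomp deg v a) g) ` GH deg (length (w # vs)))"
      by (rule lspan_br2[OF IH])
    moreover have "(\<lambda>g. br deg (degcomp deg v a) g) ` GH deg (length (w # vs)) \<subseteq> GH deg (length (v # w # vs))"
    proof
      fix z assume "z \<in> (\<lambda>g. br deg (degcomp deg v a) g) ` GH deg (length (w # vs))"
      then obtain us where us: "length us = length (w # vs)" "set us \<subseteq> Hset deg"
        and z: "z = br deg (degcomp deg v a) (rbr deg us)" unfolding GH_def by blast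
      have "us \<noteq> []" using us by auto
      then have "z = rbr deg (degcomp deg v a # us)" using z by (simp add: rbr_Cons)
      then show "z \<in> GH deg (length (v # w # vs))" unfolding GH_def using us va
        by (intro CollectI exI[of _ "degcomp deg v a # us"]) auto
    qed
    ultimately show "br deg (degcomp deg v a) ?R \<in> lspan (GH deg (length (v # w # vs)))"
      by (rule lspan_mono[rotated])
  qed
  finally show ?case .
qed

lemma Ln_GH: "z \<in> Ln deg n \<Longrightarrow> z \<in> lspan (GH deg n)"
  unfolding Ln_def by (erule lspan_subset) (auto intro: rbr_GH)

lemma br_GH:
  "us \<noteq> [] \<Longrightarrow> vs \<noteq> [] \<Longrightarrow> set us \<subseteq> Hset deg \<Longrightarrow> set vs \<subseteq> Hset deg \<Longrightarrow>
   br deg (rbr deg us) (rbr deg vs) \<in> lspan (GH deg (length us + length vs))"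
proof (induction us arbitrary: vs)
  case Nil then show ?case by simp
next
  case (Cons u us')
  show ?case
  proof (cases "us' = []")
    case True
    then have "br deg (rbr deg (u # us')) (rbr deg vs) = rbr deg (u # vs)" using Cons by (simp add: rbr_Cons)
    then show ?thesis using Cons True unfolding GH_def
      by (intro lspan_base CollectI exI[of _ "u # vs"]) auto
  next
    case False
    let ?U = "rbr deg us'" and ?V = "rbr deg vs"
    have hu: "set us' \<subseteq> Hset deg" "u \<in> Hset deg" using Cons by auto
    obtain a where a: "homog deg a u" using hu by (auto simp: Hset_def)
    obtain b where b: "homog deg b ?U" using rbr_homog[OF hu(1)] by auto
    obtain c where c: "homog deg c ?V" using rbr_homog[OF Cons.prems(4)] by auto
    have J: "br deg u (br deg ?U ?V) = br deg (br deg u ?U) ?V + smul (ksign (a * b)) (br deg ?U (br deg u ?V))"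
      by (rule jacobi[OF a b c])
    have e: "br deg (rbr deg (u # us')) ?V = br deg u (br deg ?U ?V) - smul (ksign (a * b)) (br deg ?U (br deg u ?V))"
      using J False by (simp add: rbr_Cons)
    have IH1: "br deg ?U ?V \<in> lspan (GH deg (length us' + length vs))"
      using Cons False hu by auto
    have t1: "br deg u (br deg ?U ?V) \<in> lspan (GH deg (length (u # us') + length vs))"
    proof -
      have "br deg u (br deg ?U ?V) \<in> lspan ((\<lambda>g. br deg u g) ` GH deg (length us' + length vs))"
        by (rule lspan_br2[OF IH1])
      moreover have "(\<lambda>g. br deg u g) ` GH deg (length us' + length vs) \<subseteq> GH deg (length (u # us') + length vs)"
      proof
        fix z assume "z \<in> (\<lambda>g. br deg u g) ` GH deg (length us' + length vs)"
        then obtain ws where ws: "length ws = length us' + length vs" "set ws \<subseteq> Hset deg"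
          and z: "z = br deg u (rbr deg ws)" unfolding GH_def by blast
        have "ws \<noteq> []" using ws False by auto
        then have "z = rbr deg (u # ws)" using z by (simp add: rbr_Cons)
        then show "z \<in> GH deg (length (u # us') + length vs)" unfolding GH_def using ws hu
          by (intro CollectI exI[of _ "u # ws"]) auto
      qed
      ultimately show ?thesis by (rule lspan_mono[rotated])
    qed
    have uv: "br deg u ?V = rbr deg (u # vs)" using Cons by (simp add: rbr_Cons)
    have t2: "br deg ?U (br deg u ?V) \<in> lspan (GH deg (length (u # us') + length vs))"
      unfolding uv using Cons.IH[of "u # vs"] False hu Cons.prems by auto
    show ?thesis unfolding e using t1 t2 by (intro lspan_minus lspan_smul)
  qed
qed

lemma lspan_bilin:
  assumes "z1 \<in> lspan G1" "z2 \<in> lspan G2"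
    and "\<And>g1 g2. g1 \<in> G1 \<Longrightarrow> g2 \<in> G2 \<Longrightarrow> br deg g1 g2 \<in> lspan G"
  shows "br deg z1 z2 \<in> lspan G"
proof -
  have inner: "br deg g1 z2 \<in> lspan G" if g1: "g1 \<in> G1" for g1
  proof (rule lspan_lin[where f="br deg g1", OF _ _ _ _ assms(2)])
    show "br deg g1 0 = 0" by (rule br_zero2)
    show "br deg g1 (x + y) = br deg g1 x + br deg g1 y" for x y by (rule br_add2)
    show "br deg g1 (smul c x) = smul c (br deg g1 x)" for c x by (rule br_smul2)
    show "br deg g1 g \<in> lspan G" if "g \<in> G2" for g by (rule assms(3)[OF g1 that])
  qed
  show ?thesis
  proof (rule lspan_lin[where f="\<lambda>z. br deg z z2", OF _ _ _ _ assms(1)])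
    show "br deg 0 z2 = 0" by (rule br_zero1)
    show "br deg (x + y) z2 = br deg x z2 + br deg y z2" for x y by (rule br_add1)
    show "br deg (smul c x) z2 = smul c (br deg x z2)" for c x by (rule br_smul1)
    show "br deg g z2 \<in> lspan G" if "g \<in> G1" for g by (rule inner[OF that])
  qed
qed

lemma Ln_br: "z1 \<in> Ln deg a \<Longrightarrow> z2 \<in> Ln deg b \<Longrightarrow> br deg z1 z2 \<in> Ln deg (a + b)"
proof -
  assume "z1 \<in> Ln deg a" "z2 \<in> Ln deg b"
  then have "br deg z1 z2 \<in> lspan (GH deg (a + b))"
  proof (rule lspan_bilin[OF Ln_GH Ln_GH])
    fix g1 g2 assume "g1 \<in> GH deg a" "g2 \<in> GH deg b"
    then obtain us vs where u: "g1 = rbr deg us" "length us = a" "set us \<subseteq> Hset deg"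
      and v: "g2 = rbr deg vs" "length vs = b" "set vs \<subseteq> Hset deg" unfolding GH_def by blast
    show "br deg g1 g2 \<in> lspan (GH deg (a + b))"
    proof (cases "us = [] \<or> vs = []")
      case True
      then have "g1 = 0 \<or> g2 = 0" using u v by auto
      then have "br deg g1 g2 = 0" by auto
      then show ?thesis by (simp only: lspan_zero)
    next
      case False
      have "br deg (rbr deg us) (rbr deg vs) \<in> lspan (GH deg (length us + length vs))"
        using False u(3) v(3) by (intro br_GH) auto
      then show ?thesis using u v by simp
    qed
  qed
  moreover have "GH deg (a + b) \<subseteq> lspan {rbr deg vs | vs. length vs = a + b \<and> set vs \<subseteq> Vsp deg}"
    using GH_Ln[of deg "a + b"] by (simp add: Ln_def)
  ultimately show ?thesis unfolding Ln_def by (rule lspan_subset)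
qed

lemma lencomp_br:
  "lencomp (br deg x y) n = (\<Sum>a\<le>n. br deg (lencomp x a) (lencomp y (n - a)))"
proof (rule ext)
  fix w
  show "lencomp (br deg x y) n w = (\<Sum>a\<le>n. br deg (lencomp x a) (lencomp y (n - a))) w"
  proof (cases "length w = n")
    case False
    have "(\<Sum>a\<le>n. br deg (lencomp x a) (lencomp y (n - a)) w) = 0"
    proof (rule sum.neutral, intro ballI)
      fix a assume a: "a \<in> {..n}"
      show "br deg (lencomp x a) (lencomp y (n - a)) w = 0"
        unfolding br_apply
      proof (rule sum.neutral, intro ballI)
        fix i assume i: "i \<in> {..length w}"
        show "lencomp x a (take i w) * lencomp y (n - a) (drop i w) -
          ksign (wdeg deg (take i w) * wdeg deg (drop i w)) * lencomp y (n - a) (take i w) * lencomp x a (drop i w) = 0"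
          using False a i by (auto simp: lencomp_apply)
      qed
    qed
    then show ?thesis using False by (simp add: lencomp_apply sum_app)
  next
    case True
    have "(\<Sum>a\<le>n. br deg (lencomp x a) (lencomp y (n - a)) w)
      = (\<Sum>a\<le>n. \<Sum>i\<le>n. lencomp x a (take i w) * lencomp y (n - a) (drop i w) -
          ksign (wdeg deg (take i w) * wdeg deg (drop i w)) * lencomp y (n - a) (take i w) * lencomp x a (drop i w))"
      using True by (simp add: br_apply)
    also have "\<dots> = (\<Sum>i\<le>n. \<Sum>a\<le>n. lencomp x a (take i w) * lencomp y (n - a) (drop i w) -
          ksign (wdeg deg (take i w) * wdeg deg (drop i w)) * lencomp y (n - a) (take i w) * lencomp x a (drop i w))"
      by (rule sum.swap)
    also have "\<dots> = (\<Sum>i\<le>n. x (take i w) * y (drop i w) -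
          ksign (wdeg deg (take i w) * wdeg deg (drop i w)) * y (take i w) * x (drop i w))"
    proof (rule sum.cong[OF refl])
      fix i assume i: "i \<in> {..n}"
      let ?s = "ksign (wdeg deg (take i w) * wdeg deg (drop i w))"
      have e1: "(\<Sum>a\<le>n. lencomp x a (take i w) * lencomp y (n - a) (drop i w)) = (\<Sum>a\<le>n. if a = i then x (take i w) * y (drop i w) else 0)"
        using i True by (intro sum.cong refl) (auto simp: lencomp_apply)
      have e2: "(\<Sum>a\<le>n. ?s * lencomp y (n - a) (take i w) * lencomp x a (drop i w)) = (\<Sum>a\<le>n. if a = n - i then ?s * y (take i w) * x (drop i w) else 0)"
        using i True by (intro sum.cong refl) (auto simp: lencomp_apply)
      show "(\<Sum>a\<le>n. lencomp x a (take i w) * lencomp y (n - a) (drop i w) -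
          ?s * lencomp y (n - a) (take i w) * lencomp x a (drop i w))
        = x (take i w) * y (drop i w) - ?s * y (take i w) * x (drop i w)"
        unfolding sum_subtractf e1 e2 using i by (simp add: sum.delta')
    qed
    also have "\<dots> = lencomp (br deg x y) n w" using True by (simp add: br_apply lencomp_apply)
    finally show ?thesis by (simp add: sum_app)
  qed
qed

lemma fsupp_sum: "(\<forall>i\<in>S. finite {w. f i w \<noteq> 0}) \<Longrightarrow> finite {w. (\<Sum>i\<in>S. f i) w \<noteq> (0::rat)}"
proof -
  assume a: "\<forall>i\<in>S. finite {w. f i w \<noteq> 0}"
  show ?thesis
  proof (cases "finite S")
    case True
    have "{w. (\<Sum>i\<in>S. f i) w \<noteq> 0} \<subseteq> (\<Union>i\<in>S. {w. f i w \<noteq> 0})"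
      by (auto simp: sum_app intro: ccontr dest: sum.neutral)
    then show ?thesis using True a by (auto intro: finite_subset)
  next
    case False then show ?thesis by simp
  qed
qed

lemma Lhat_br: assumes x: "x \<in> Lhat deg" and y: "y \<in> Lhat deg" shows "br deg x y \<in> Lhat deg"
proof -
  have xT: "x \<in> TT deg" and yT: "y \<in> TT deg" using x y by (auto simp: Lhat_def)
  have "degs deg (br deg x y) \<subseteq> (\<lambda>(a, b). a + b) ` (degs deg x \<times> degs deg y)"
  proof
    fix d assume "d \<in> degs deg (br deg x y)"
    then obtain w where w: "d = wdeg deg w" "br deg x y w \<noteq> 0" by (auto simp: degs_def)
    then obtain u v where uv: "w = u @ v" "(x u \<noteq> 0 \<and> y v \<noteq> 0) \<or> (y u \<noteq> 0 \<and> x v \<noteq> 0)"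
      using br_supp by blast
    have d: "d = wdeg deg u + wdeg deg v" using uv w by simp
    from uv(2) show "d \<in> (\<lambda>(a, b). a + b) ` (degs deg x \<times> degs deg y)"
    proof
      assume "x u \<noteq> 0 \<and> y v \<noteq> 0"
      then have "(wdeg deg u, wdeg deg v) \<in> degs deg x \<times> degs deg y" by (auto simp: degs_def)
      then show ?thesis using d by force
    next
      assume "y u \<noteq> 0 \<and> x v \<noteq> 0"
      then have "(wdeg deg v, wdeg deg u) \<in> degs deg x \<times> degs deg y" by (auto simp: degs_def)
      moreover have "d = (\<lambda>(a, b). a + b) (wdeg deg v, wdeg deg u)" using d by simp
      ultimately show ?thesis by blast
    qed
  qed
  then have fd: "finite (degs deg (br deg x y))"
    using xT yT by (auto simp: TT_def intro: finite_subset)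
  have lfin: "finite {w. lencomp z a w \<noteq> 0}" if "z \<in> TT deg" for z a
  proof -
    have "{w. lencomp z a w \<noteq> 0} = {w. length w = a \<and> z w \<noteq> 0}" by (auto simp: lencomp_apply)
    then show ?thesis using that by (simp add: TT_def)
  qed
  have fl: "finite {w. length w = n \<and> br deg x y w \<noteq> 0}" for n
  proof -
    have "finite {w. (\<Sum>a\<le>n. br deg (lencomp x a) (lencomp y (n - a))) w \<noteq> 0}"
      by (intro fsupp_sum ballI finite_supp_br lfin xT yT)
    then have "finite {w. lencomp (br deg x y) n w \<noteq> 0}" by (simp add: lencomp_br)
    moreover have "{w. length w = n \<and> br deg x y w \<noteq> 0} = {w. lencomp (br deg x y) n w \<noteq> 0}"
      by (auto simp: lencomp_apply)
    ultimately show ?thesis by simp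
  qed
  have "lencomp (br deg x y) n \<in> Ln deg n" for n
  proof -
    have "(\<Sum>a\<le>n. br deg (lencomp x a) (lencomp y (n - a))) \<in> lspan {rbr deg vs | vs. length vs = n \<and> set vs \<subseteq> Vsp deg}"
    proof (rule lspan_sum, intro ballI)
      fix a assume "a \<in> {..n}"
      then have "br deg (lencomp x a) (lencomp y (n - a)) \<in> Ln deg (a + (n - a))"
        using x y by (intro Ln_br) (auto simp: Lhat_def)
      then show "br deg (lencomp x a) (lencomp y (n - a)) \<in> lspan {rbr deg vs | vs. length vs = n \<and> set vs \<subseteq> Vsp deg}"
        using \<open>a \<in> {..n}\<close> by (simp add: Ln_def)
    qed
    then show ?thesis by (simp add: lencomp_br Ln_def)
  qed
  then show ?thesis using fd fl by (simp add: Lhat_def TT_def)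
qed

lemma is_der_dbr:
  assumes A: "is_der deg j \<theta>" and B: "is_der deg k \<eta>"
  shows "is_der deg (j + k) (dbr j k \<theta> \<eta>)"
  unfolding is_der_def
proof (intro conjI allI ballI impI)
  fix x assume "x \<notin> Lhat deg"
  then show "dbr j k \<theta> \<eta> x = 0"
    by (simp add: dbr_def der_out[OF A] der_out[OF B] der_zero[OF A] der_zero[OF B])
next
  fix x assume x: "x \<in> Lhat deg"
  then show "dbr j k \<theta> \<eta> x \<in> Lhat deg"
    unfolding dbr_def by (intro Lhat_minus Lhat_smul der_Lhat[OF A] der_Lhat[OF B])
next
  fix x y assume x: "x \<in> Lhat deg" and y: "y \<in> Lhat deg"
  have "\<theta> (\<eta> (x + y)) = \<theta> (\<eta> x) + \<theta> (\<eta> y)"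
    using x y by (simp add: der_add[OF B] der_add[OF A] der_Lhat[OF B])
  moreover have "\<eta> (\<theta> (x + y)) = \<eta> (\<theta> x) + \<eta> (\<theta> y)"
    using x y by (simp add: der_add[OF B] der_add[OF A] der_Lhat[OF A])
  ultimately show "dbr j k \<theta> \<eta> (x + y) = dbr j k \<theta> \<eta> x + dbr j k \<theta> \<eta> y"
    unfolding dbr_def by (simp add: fun_eq_iff algebra_simps)
next
  fix c x assume x: "x \<in> Lhat deg"
  have "\<theta> (\<eta> (smul c x)) = smul c (\<theta> (\<eta> x))"
    using x by (simp add: der_smul[OF B] der_smul[OF A] der_Lhat[OF B])
  moreover have "\<eta> (\<theta> (smul c x)) = smul c (\<eta> (\<theta> x))"
    using x by (simp add: der_smul[OF B] der_smul[OF A] der_Lhat[OF A])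
  ultimately show "dbr j k \<theta> \<eta> (smul c x) = smul c (dbr j k \<theta> \<eta> x)"
    unfolding dbr_def by (simp add: fun_eq_iff algebra_simps)
next
  fix a x assume x: "x \<in> Lhat deg" and h: "homog deg a x"
  have 1: "homog deg (a + (j + k)) (\<theta> (\<eta> x))"
    using der_homog[OF A der_Lhat[OF B x] der_homog[OF B x h]] by (simp add: ac_simps)
  have 2: "homog deg (a + (j + k)) (\<eta> (\<theta> x))"
    using der_homog[OF B der_Lhat[OF A x] der_homog[OF A x h]] by (simp add: ac_simps)
  show "homog deg (a + (j + k)) (dbr j k \<theta> \<eta> x)"
    unfolding dbr_def by (intro homog_minus homog_smul 1 2)
next
  fix a x y assume x: "x \<in> Lhat deg" and y: "y \<in> Lhat deg" and h: "homog deg a x"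
  have ex: "\<eta> x \<in> Lhat deg" "\<theta> x \<in> Lhat deg" using x by (simp_all add: der_Lhat[OF A] der_Lhat[OF B])
  have ey: "\<eta> y \<in> Lhat deg" "\<theta> y \<in> Lhat deg" using y by (simp_all add: der_Lhat[OF A] der_Lhat[OF B])
  have hx: "homog deg (a + k) (\<eta> x)" "homog deg (a + j) (\<theta> x)" using x h der_homog[OF A] der_homog[OF B] by auto
  let ?s = ksign
  have T1: "\<theta> (\<eta> (br deg x y)) = br deg (\<theta> (\<eta> x)) y + smul (?s (j * (a + k))) (br deg (\<eta> x) (\<theta> y))
      + smul (?s (k * a)) (br deg (\<theta> x) (\<eta> y) + smul (?s (j * a)) (br deg x (\<theta> (\<eta> y))))"
  proof -
    have "\<theta> (\<eta> (br deg x y)) = \<theta> (br deg (\<eta> x) y + smul (?s (k * a)) (br deg x (\<eta> y)))"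
      by (simp add: der_br[OF B x y h])
    also have "\<dots> = \<theta> (br deg (\<eta> x) y) + smul (?s (k * a)) (\<theta> (br deg x (\<eta> y)))"
      using x y ex ey by (simp add: der_add[OF A] der_smul[OF A] Lhat_br Lhat_smul)
    also have "\<dots> = br deg (\<theta> (\<eta> x)) y + smul (?s (j * (a + k))) (br deg (\<eta> x) (\<theta> y))
      + smul (?s (k * a)) (br deg (\<theta> x) (\<eta> y) + smul (?s (j * a)) (br deg x (\<theta> (\<eta> y))))"
      using x y ex ey hx h by (simp add: der_br[OF A])
    finally show ?thesis .
  qed
  have T2: "\<eta> (\<theta> (br deg x y)) = br deg (\<eta> (\<theta> x)) y + smul (?s (k * (a + j))) (br deg (\<theta> x) (\<eta> y))
      + smul (?s (j * a)) (br deg (\<eta> x) (\<theta> y) + smul (?s (k * a)) (br deg x (\<eta> (\<theta> y))))"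
  proof -
    have "\<eta> (\<theta> (br deg x y)) = \<eta> (br deg (\<theta> x) y + smul (?s (j * a)) (br deg x (\<theta> y)))"
      by (simp add: der_br[OF A x y h])
    also have "\<dots> = \<eta> (br deg (\<theta> x) y) + smul (?s (j * a)) (\<eta> (br deg x (\<theta> y)))"
      using x y ex ey by (simp add: der_add[OF B] der_smul[OF B] Lhat_br Lhat_smul)
    also have "\<dots> = br deg (\<eta> (\<theta> x)) y + smul (?s (k * (a + j))) (br deg (\<theta> x) (\<eta> y))
      + smul (?s (j * a)) (br deg (\<eta> x) (\<theta> y) + smul (?s (k * a)) (br deg x (\<eta> (\<theta> y))))"
      using x y ex ey hx h by (simp add: der_br[OF B])
    finally show ?thesis .
  qed
  have s1: "?s (j * (a + k)) = ?s (j * a) * ?s (j * k)" by (simp add: distrib_left ksign_add)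
  have s2: "?s (k * (a + j)) = ?s (k * a) * ?s (j * k)" by (simp add: distrib_left ksign_add mult.commute)
  have s3: "?s ((j + k) * a) = ?s (j * a) * ?s (k * a)" by (simp add: distrib_right ksign_add)
  show "dbr j k \<theta> \<eta> (br deg x y) = br deg (dbr j k \<theta> \<eta> x) y + smul (?s ((j + k) * a)) (br deg x (dbr j k \<theta> \<eta> y))"
  proof (rule ext)
    fix w
    define P where "P = ?s (j * a)"
    define Q where "Q = ?s (k * a)"
    define R where "R = ?s (j * k)"
    have RR: "R * R = 1" by (simp add: R_def ksign_sq)
    show "dbr j k \<theta> \<eta> (br deg x y) w = (br deg (dbr j k \<theta> \<eta> x) y + smul (?s ((j + k) * a)) (br deg x (dbr j k \<theta> \<eta> y))) w"
      unfolding dbr_def T1 T2 br_minus1 br_minus2 br_smul1 br_smul2 s1 s2 s3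
        P_def[symmetric] Q_def[symmetric] R_def[symmetric]
      apply (simp add: algebra_simps)
      apply (simp add: mult.assoc[symmetric] RR)
      done
  qed
qed

locale dfilt = filt deg Vf q for deg :: "'b \<Rightarrow> int" and Vf q +
  fixes d :: "'b tens \<Rightarrow> 'b tens"
  assumes d_der: "is_der deg (-1) d"
    and d_filt: "\<forall>n. \<forall>x\<in>Lge deg n. d x \<in> Lge deg n"
    and minimal: "\<forall>v\<in>Vsp deg. d v \<in> Lge deg 2"
begin

lemma d_rbr: "set vs \<subseteq> Vsp deg \<Longrightarrow> vs \<noteq> [] \<Longrightarrow> length w < length vs + 1 \<Longrightarrow> d (rbr deg vs) w = 0"
proof (induction vs arbitrary: w rule: induct_list012)
  case 1 then show ?case by simp
next
  case (2 v) then show ?case using minimal by (auto simp: Lge_def)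
next
  case (3 v u vs)
  let ?R = "rbr deg (u # vs)"
  have v: "v \<in> Vsp deg" and us: "set (u # vs) \<subseteq> Vsp deg" using 3 by auto
  have R: "?R \<in> Lhat deg" by (rule rbr_Lhat[OF us])
  have Rv: "\<And>w'. length w' < length (u # vs) \<Longrightarrow> ?R w' = 0"
    using rbr_supp[OF us] by fastforce
  have dR: "\<And>w'. length w' < length (u # vs) + 1 \<Longrightarrow> d ?R w' = 0"
    using 3 by auto
  have fin: "finite (degs deg v)" using v by (simp add: Vsp_def TT_def)
  have va: "\<And>a. degcomp deg v a \<in> Vsp deg" using v by (rule Vsp_degcomp)
  have v0: "degcomp deg v a u = 0" if "length u < 1" for a u
  proof (rule ccontr)
    assume "degcomp deg v a u \<noteq> 0"
    then have "length u = 1" using va[of a] unfolding Vsp_def by blast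
    with that show False by simp
  qed
  have "rbr deg (v # u # vs) = (\<Sum>a\<in>degs deg v. br deg (degcomp deg v a) ?R)"
    using degcomp_decomp[OF fin] br_sum1 by (metis rbr_Cons2)
  moreover have "d (\<Sum>a\<in>degs deg v. br deg (degcomp deg v a) ?R) = (\<Sum>a\<in>degs deg v. d (br deg (degcomp deg v a) ?R))"
    by (rule der_sum[OF d_der]) (use va R in \<open>auto intro: Lhat_br Vsp_Lhat\<close>)
  ultimately have "d (rbr deg (v # u # vs)) = (\<Sum>a\<in>degs deg v. d (br deg (degcomp deg v a) ?R))"
    by simp
  also have "\<dots> = (\<Sum>a\<in>degs deg v. br deg (d (degcomp deg v a)) ?R + smul (ksign (- 1 * a)) (br deg (degcomp deg v a) (d ?R)))"
    by (intro sum.cong refl der_br[OF d_der] Vsp_Lhat va R homog_degcomp)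
  finally have e: "d (rbr deg (v # u # vs)) w = (\<Sum>a\<in>degs deg v. br deg (d (degcomp deg v a)) ?R w + ksign (- 1 * a) * br deg (degcomp deg v a) (d ?R) w)"
    by (simp add: sum_app)
  have lw: "length w < 2 + length (u # vs)" "length w < 1 + (length (u # vs) + 1)" using 3 by auto
  show ?case unfolding e
  proof (rule sum.neutral, intro ballI)
    fix a
    have "d (degcomp deg v a) \<in> Lge deg 2" using minimal va[of a] by blast
    then have dva: "\<And>u. length u < 2 \<Longrightarrow> d (degcomp deg v a) u = 0" by (simp add: Lge_def)
    have z1: "br deg (d (degcomp deg v a)) ?R w = 0"
      by (rule br_vanish[OF dva Rv lw(1)])
    have z2: "br deg (degcomp deg v a) (d ?R) w = 0"
      by (rule br_vanish[OF _ dR lw(2)]) (rule v0)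
    show "br deg (d (degcomp deg v a)) ?R w + ksign (- 1 * a) * br deg (degcomp deg v a) (d ?R) w = 0"
      using z1 z2 by simp
  qed
qed

lemma d_lspan: "z \<in> lspan G \<Longrightarrow> G \<subseteq> Lhat deg \<Longrightarrow> (\<And>g w. g \<in> G \<Longrightarrow> length w < m \<Longrightarrow> d g w = 0)
   \<Longrightarrow> z \<in> Lhat deg \<and> (\<forall>w. length w < m \<longrightarrow> d z w = 0)"
proof (induction z rule: lspan.induct)
  case lspan_zero
  have "d 0 = 0" by (rule der_zero[OF d_der])
  then show ?case using Lhat_zero by (metis zero_fun_apply)
next
  case (lspan_base x) then show ?case by auto
next
  case (lspan_add x y)
  have e: "d (x + y) = d x + d y" using lspan_add by (intro der_add[OF d_der]) auto
  have xy: "x + y \<in> Lhat deg" by (rule Lhat_add) (use lspan_add in auto)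
  have "\<forall>w. length w < m \<longrightarrow> d (x + y) w = 0"
  proof (intro allI impI)
    fix w :: "'b list" assume w: "length w < m"
    have "d x w = 0" "d y w = 0" using lspan_add w by auto
    then show "d (x + y) w = 0" unfolding e dplus_app by simp
  qed
  with xy show ?case by blast
next
  case (lspan_smul x c)
  have e: "d (smul c x) = smul c (d x)" using lspan_smul by (intro der_smul[OF d_der]) auto
  have xy: "smul c x \<in> Lhat deg" by (rule Lhat_smul) (use lspan_smul in auto)
  have "\<forall>w. length w < m \<longrightarrow> d (smul c x) w = 0"
  proof (intro allI impI)
    fix w :: "'b list" assume w: "length w < m"
    have "d x w = 0" using lspan_smul w by auto
    then show "d (smul c x) w = 0" unfolding e by simp
  qed
  with xy show ?case by blast
qed

lemma d_Fnp: assumes n: "1 \<le> n" and x: "x \<in> Fnp deg Vf q n p" shows "d x \<in> Fnp deg Vf q n p"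
proof -
  have xL: "x \<in> Lhat deg" using x by (simp add: Fnp_def)
  let ?z = "lencomp x n"
  have zL: "?z \<in> Lnp deg Vf q n p" using x by (simp add: Fnp_def)
  have zH: "?z \<in> Lhat deg" by (rule Lhat_lencomp[OF xL])
  have r: "x - ?z \<in> Lge deg (n + 1)"
    using x Lhat_minus[OF xL zH] by (auto simp: Lge_def Fnp_def lencomp_apply)
  have dr: "d (x - ?z) \<in> Lge deg (n + 1)" using d_filt r by blast
  have dz: "\<forall>w. length w < n + 1 \<longrightarrow> d ?z w = 0"
  proof -
    have "?z \<in> lspan (Gnp n p)" using zL by (simp add: Lnp_eq)
    moreover have "Gnp n p \<subseteq> Lhat deg" by (auto elim!: Gnp_elim intro: rbr_Lhat)
    moreover have "d g w = 0" if "g \<in> Gnp n p" "length w < n + 1" for g w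
      using that(1)
    proof (rule Gnp_elim)
      fix vs assume "g = rbr deg vs" "length vs = n" "set vs \<subseteq> Vsp deg"
      moreover then have "vs \<noteq> []" using n by auto
      ultimately show "d g w = 0" using d_rbr[of vs w] n that(2) by auto
    qed
    ultimately have "?z \<in> Lhat deg \<and> (\<forall>w. length w < n + 1 \<longrightarrow> d ?z w = 0)" by (rule d_lspan)
    then show ?thesis by blast
  qed
  have e0: "d (?z + (x - ?z)) = d ?z + d (x - ?z)" by (rule der_add[OF d_der zH Lhat_minus[OF xL zH]])
  have "?z + (x - ?z) = x" by simp
  then have e: "d x = d ?z + d (x - ?z)" using e0 by simp
  have dx: "d x \<in> Lhat deg" by (rule der_Lhat[OF d_der xL])
  have v: "\<forall>w. length w < n + 1 \<longrightarrow> d x w = 0" using dz dr unfolding e by (auto simp: Lge_def)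
  then have "lencomp (d x) n = 0" by (auto simp: fun_eq_iff lencomp_apply)
  then show ?thesis using dx v by (auto simp: Fnp_def Lnp_eq lspan_zero)
qed

lemma d_Ffilt: "x \<in> Ffilt deg Vf q t \<Longrightarrow> d x \<in> Ffilt deg Vf q t"
  by (metis Ffilt_elim Ffilt_eq d_Fnp)

end

lemma DerL_der: "is_der deg k \<theta> \<Longrightarrow> \<theta> \<in> DerL deg"
  unfolding DerL_def by (intro CollectI exI[of _ "{k}"] exI[of _ "\<lambda>_. \<theta>"]) auto

lemma DerL_elim:
  assumes "\<theta> \<in> DerL deg"
  obtains K f where "finite K" "\<forall>k\<in>K. is_der deg k (f k)" "\<theta> = (\<lambda>x. \<Sum>k\<in>K. f k x)"
  using assms unfolding DerL_def by blast

lemma DerL_out: assumes "\<theta> \<in> DerL deg" "x \<notin> Lhat deg" shows "\<theta> x = 0"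
proof -
  obtain K f where 1: "finite K" "\<forall>k\<in>K. is_der deg k (f k)" "\<theta> = (\<lambda>x. \<Sum>k\<in>K. f k x)"
    using assms(1) by (rule DerL_elim)
  have "\<forall>k\<in>K. f k x = 0" using 1 assms(2) der_out by blast
  then show ?thesis using 1 by simp
qed

lemma DerL_Lhat: assumes "\<theta> \<in> DerL deg" "x \<in> Lhat deg" shows "\<theta> x \<in> Lhat deg"
proof -
  obtain K f where 1: "finite K" "\<forall>k\<in>K. is_der deg k (f k)" "\<theta> = (\<lambda>x. \<Sum>k\<in>K. f k x)"
    using assms(1) by (rule DerL_elim)
  have "\<forall>k\<in>K. f k x \<in> Lhat deg" using 1 assms(2) der_Lhat by blast
  then show ?thesis using 1 by (simp add: Lhat_sum)
qed

lemma zero_der_fun: "(0 :: 'b tens \<Rightarrow> 'b tens) = (\<lambda>x. 0)" by (simp add: zero_fun_def)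

lemma DerL_zero: "(0 :: 'b tens \<Rightarrow> 'b tens) \<in> DerL deg"
  unfolding zero_der_fun by (rule DerL_der[OF is_der_zero])

lemma is_der_if: "(k \<in> K \<Longrightarrow> is_der deg k (f k)) \<Longrightarrow> is_der deg k (\<lambda>x. if k \<in> K then f k x else 0)"
  by (cases "k \<in> K") (simp_all add: is_der_zero)

lemma DerL_add:
  assumes "\<theta> \<in> DerL deg" "\<eta> \<in> DerL deg"
  shows "\<theta> + \<eta> \<in> DerL deg"
proof -
  obtain K1 f1 where 1: "finite K1" "\<forall>k\<in>K1. is_der deg k (f1 k)" "\<theta> = (\<lambda>x. \<Sum>k\<in>K1. f1 k x)"
    using assms(1) by (rule DerL_elim)
  obtain K2 f2 where 2: "finite K2" "\<forall>k\<in>K2. is_der deg k (f2 k)" "\<eta> = (\<lambda>x. \<Sum>k\<in>K2. f2 k x)"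
    using assms(2) by (rule DerL_elim)
  define g where "g k = (\<lambda>x. if k \<in> K1 then f1 k x else 0) + (\<lambda>x. if k \<in> K2 then f2 k x else 0)" for k
  have "is_der deg k (g k)" for k
    unfolding g_def using 1 2 by (intro is_der_add is_der_if) auto
  moreover have "\<theta> + \<eta> = (\<lambda>x. \<Sum>k\<in>K1 \<union> K2. g k x)"
  proof (rule ext)
    fix x
    have a: "(\<Sum>k\<in>K1 \<union> K2. if k \<in> K1 then f1 k x else 0) = (\<Sum>k\<in>K1. f1 k x)"
      using 1 2 sum.inter_restrict[of "K1 \<union> K2" "\<lambda>k. f1 k x" K1] by (simp add: Int_absorb1)
    have b: "(\<Sum>k\<in>K1 \<union> K2. if k \<in> K2 then f2 k x else 0) = (\<Sum>k\<in>K2. f2 k x)"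
      using 1 2 sum.inter_restrict[of "K1 \<union> K2" "\<lambda>k. f2 k x" K2] by (simp add: Int_absorb1 Int_commute)
    show "(\<theta> + \<eta>) x = (\<Sum>k\<in>K1 \<union> K2. g k x)"
      unfolding g_def dplus_app sum.distrib a b using 1 2 by simp
  qed
  ultimately show ?thesis unfolding DerL_def using 1 2
    by (intro CollectI exI[of _ "K1 \<union> K2"] exI[of _ g]) auto
qed

lemma DerL_smul:
  assumes "\<theta> \<in> DerL deg"
  shows "(\<lambda>x. smul c (\<theta> x)) \<in> DerL deg"
proof -
  obtain K f where 1: "finite K" "\<forall>k\<in>K. is_der deg k (f k)" "\<theta> = (\<lambda>x. \<Sum>k\<in>K. f k x)"
    using assms(1) by (rule DerL_elim)
  have "(\<lambda>x. smul c (\<theta> x)) = (\<lambda>x. \<Sum>k\<in>K. smul c (f k x))"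
    using 1 by (simp add: smul_sum)
  then show ?thesis unfolding DerL_def using 1
    by (intro CollectI exI[of _ K] exI[of _ "\<lambda>k x. smul c (f k x)"]) (auto intro: is_der_smul)
qed

lemma DerL_minus:
  assumes "\<theta> \<in> DerL deg" "\<eta> \<in> DerL deg"
  shows "\<theta> - \<eta> \<in> DerL deg"
  unfolding fun_minus_eq using assms by (intro DerL_add DerL_smul)

lemma dercomp_eq:
  assumes K: "finite K" "\<forall>k\<in>K. is_der deg k (f k)"
  shows "dercomp deg (\<lambda>x. \<Sum>k'\<in>K. f k' x) k = (\<lambda>x. if k \<in> K then f k x else 0)"
proof (rule ext)
  fix x
  show "dercomp deg (\<lambda>x. \<Sum>k'\<in>K. f k' x) k x = (if k \<in> K then f k x else 0)"
  proof (cases "x \<in> Lhat deg")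
    case False
    have "\<forall>k'\<in>K. f k' x = 0" using K False der_out by blast
    then show ?thesis using False by (simp add: dercomp_def)
  next
    case True
    have fin: "finite (degs deg x)" using True by (simp add: Lhat_def TT_def)
    have xj: "degcomp deg x j \<in> Lhat deg" for j using True by (rule Lhat_degcomp)
    have inner: "degcomp deg (\<Sum>k'\<in>K. f k' (degcomp deg x j)) (j + k) = (if k \<in> K then f k (degcomp deg x j) else 0)" for j
    proof -
      have "degcomp deg (\<Sum>k'\<in>K. f k' (degcomp deg x j)) (j + k) = (\<Sum>k'\<in>K. degcomp deg (f k' (degcomp deg x j)) (j + k))"
        by (rule degcomp_sum)
      also have "\<dots> = (\<Sum>k'\<in>K. if k' = k then f k' (degcomp deg x j) else 0)"
      proof (rule sum.cong[OF refl])
        fix k' assume k': "k' \<in> K"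
        have h: "homog deg (j + k') (f k' (degcomp deg x j))"
          using K k' xj by (intro der_homog homog_degcomp) auto
        show "degcomp deg (f k' (degcomp deg x j)) (j + k) = (if k' = k then f k' (degcomp deg x j) else 0)"
          using degcomp_homog_same[OF h] degcomp_homog_other[OF h, of "j + k"] by auto
      qed
      also have "\<dots> = (if k \<in> K then f k (degcomp deg x j) else 0)"
        using K(1) by (simp add: sum.delta')
      finally show ?thesis .
    qed
    have "dercomp deg (\<lambda>x. \<Sum>k'\<in>K. f k' x) k x = (\<Sum>j\<in>degs deg x. if k \<in> K then f k (degcomp deg x j) else 0)"
      using True by (simp add: dercomp_def inner)
    also have "\<dots> = (if k \<in> K then f k x else 0)"
    proof (cases "k \<in> K")
      case True2: True
      have "(\<Sum>j\<in>degs deg x. f k (degcomp deg x j)) = f k (\<Sum>j\<in>degs deg x. degcomp deg x j)"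
        using K True2 xj by (intro der_sum[symmetric]) auto
      then show ?thesis using True2 degcomp_decomp[OF fin] by simp
    next
      case False then show ?thesis by simp
    qed
    finally show ?thesis .
  qed
qed

lemma dercomp_DerL: "\<theta> \<in> DerL deg \<Longrightarrow> dercomp deg \<theta> k \<in> DerL deg"
proof (erule DerL_elim)
  fix K f assume K: "finite K" "\<forall>k\<in>K. is_der deg k (f k)" and t: "\<theta> = (\<lambda>x. \<Sum>k\<in>K. f k x)"
  show "dercomp deg \<theta> k \<in> DerL deg"
    unfolding t dercomp_eq[OF K] using K by (intro DerL_der[of deg k] is_der_if) auto
qed

context filt
begin

lemma DF_elim:
  assumes "\<theta> \<in> DF deg Vf q n"
  shows "\<theta> \<in> DerL deg" "\<And>r x. r \<ge> 1 \<Longrightarrow> x \<in> Ffilt deg Vf q r \<Longrightarrow> \<theta> x \<in> Ffilt deg Vf q (n + r)"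
  using assms by (auto simp: DF_def)

lemma DF_intro:
  assumes "\<theta> \<in> DerL deg" "\<And>r x. r \<ge> 1 \<Longrightarrow> x \<in> Ffilt deg Vf q r \<Longrightarrow> \<theta> x \<in> Ffilt deg Vf q (n + r)"
  shows "\<theta> \<in> DF deg Vf q n"
  using assms by (auto simp: DF_def)

lemma DF_app: "\<theta> \<in> DF deg Vf q n \<Longrightarrow> x \<in> Ffilt deg Vf q r \<Longrightarrow> \<theta> x \<in> Ffilt deg Vf q (n + r)"
  using DF_elim(2) Ffilt_pos by blast

lemma DF_mono: "n \<ge> 1 \<Longrightarrow> DF deg Vf q (Suc n) \<subseteq> DF deg Vf q n"
proof
  fix \<theta> assume n: "n \<ge> 1" and t: "\<theta> \<in> DF deg Vf q (Suc n)"
  show "\<theta> \<in> DF deg Vf q n"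
  proof (rule DF_intro)
    show "\<theta> \<in> DerL deg" using t by (rule DF_elim)
    fix r x assume "r \<ge> 1" "x \<in> Ffilt deg Vf q r"
    then have "\<theta> x \<in> Ffilt deg Vf q (Suc n + r)" using t by (rule DF_elim(2)[rotated])
    then show "\<theta> x \<in> Ffilt deg Vf q (n + r)" using Ffilt_anti[of "n + r" "Suc n + r"] n by auto
  qed
qed

lemma DF_zero: "n \<ge> 1 \<Longrightarrow> 0 \<in> DF deg Vf q n"
  by (intro DF_intro DerL_zero) (simp add: dzero_app Ffilt_zero)

lemma DF_add: "\<theta> \<in> DF deg Vf q n \<Longrightarrow> \<eta> \<in> DF deg Vf q n \<Longrightarrow> \<theta> + \<eta> \<in> DF deg Vf q n"
  by (intro DF_intro DerL_add) (auto simp: dplus_app intro: Ffilt_add DF_app dest: DF_elim(1))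

lemma DF_smul: "\<theta> \<in> DF deg Vf q n \<Longrightarrow> (\<lambda>x. smul c (\<theta> x)) \<in> DF deg Vf q n"
  by (intro DF_intro DerL_smul) (auto intro: Ffilt_smul DF_app dest: DF_elim(1))

lemma DF_minus: "\<theta> \<in> DF deg Vf q n \<Longrightarrow> \<eta> \<in> DF deg Vf q n \<Longrightarrow> \<theta> - \<eta> \<in> DF deg Vf q n"
  unfolding fun_minus_eq by (intro DF_add DF_smul)

lemma DF_dercomp: "\<theta> \<in> DF deg Vf q n \<Longrightarrow> n \<ge> 1 \<Longrightarrow> dercomp deg \<theta> k \<in> DF deg Vf q n"
proof (rule DF_intro)
  assume t: "\<theta> \<in> DF deg Vf q n" and n: "n \<ge> 1"
  show "dercomp deg \<theta> k \<in> DerL deg" using t by (intro dercomp_DerL DF_elim(1))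
  fix r x assume r: "r \<ge> 1" and x: "x \<in> Ffilt deg Vf q r"
  have xL: "x \<in> Lhat deg" using x by (rule Ffilt_Lhat)
  have "(\<Sum>j\<in>degs deg x. degcomp deg (\<theta> (degcomp deg x j)) (j + k)) \<in> Ffilt deg Vf q (n + r)"
    using n x t by (intro Ffilt_sum ballI Ffilt_degcomp DF_app) auto
  then show "dercomp deg \<theta> k x \<in> Ffilt deg Vf q (n + r)" using xL by (simp add: dercomp_def)
qed

lemma DF_br:
  assumes t: "\<theta> \<in> DF deg Vf q m" and e: "\<eta> \<in> DF deg Vf q n"
    and dt: "is_der deg j \<theta>" and de: "is_der deg k \<eta>"
  shows "dbr j k \<theta> \<eta> \<in> DF deg Vf q (m + n)"
proof (rule DF_intro)
  show "dbr j k \<theta> \<eta> \<in> DerL deg" by (rule DerL_der[OF is_der_dbr[OF dt de]])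
  fix r x assume r: "r \<ge> 1" and x: "x \<in> Ffilt deg Vf q r"
  have 1: "\<theta> (\<eta> x) \<in> Ffilt deg Vf q (m + n + r)"
    using DF_app[OF t DF_app[OF e x]] by (simp add: add.assoc)
  have 2: "\<eta> (\<theta> x) \<in> Ffilt deg Vf q (m + n + r)"
    using DF_app[OF e DF_app[OF t x]] by (simp add: ac_simps)
  show "dbr j k \<theta> \<eta> x \<in> Ffilt deg Vf q (m + n + r)"
    unfolding dbr_def using 1 2 by (intro Ffilt_minus Ffilt_smul)
qed

lemma DF_Inter: "(\<Inter>n\<in>{1..}. DF deg Vf q n) = {0}"
proof
  show "{0} \<subseteq> (\<Inter>n\<in>{1..}. DF deg Vf q n)" using DF_zero by auto
next
  show "(\<Inter>n\<in>{1..}. DF deg Vf q n) \<subseteq> {0}"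
  proof
    fix \<theta> assume t: "\<theta> \<in> (\<Inter>n\<in>{1..}. DF deg Vf q n)"
    have tD: "\<theta> \<in> DerL deg" using t by (auto dest: DF_elim(1))
    have "\<theta> = 0"
    proof (rule ext)
      fix x
      show "\<theta> x = 0 x"
      proof (cases "x \<in> Lhat deg")
        case False then show ?thesis using DerL_out[OF tD] by (simp add: dzero_app)
      next
        case True
        then have x1: "x \<in> Ffilt deg Vf q 1" by (rule Lhat_Ffilt1)
        have "\<theta> x w = 0" for w
        proof -
          let ?n = "tri q (Suc (length w)) + 1"
          have "\<theta> \<in> DF deg Vf q ?n" using t by auto
          then have "\<theta> x \<in> Ffilt deg Vf q (?n + 1)" using x1 by (rule DF_app)
          then show ?thesis by (rule Ffilt_vanish) auto
        qed
        then show ?thesis by (auto simp: fun_eq_iff dzero_app)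
      qed
    qed
    then show "\<theta> \<in> {0}" by simp
  qed
qed

end

context dfilt
begin

lemma DF_D:
  assumes t: "\<theta> \<in> DF deg Vf q n" and dt: "is_der deg j \<theta>"
  shows "dbr (-1) j d \<theta> \<in> DF deg Vf q n"
proof (rule DF_intro)
  show "dbr (-1) j d \<theta> \<in> DerL deg" by (rule DerL_der[OF is_der_dbr[OF d_der dt]])
  fix r x assume r: "r \<ge> 1" and x: "x \<in> Ffilt deg Vf q r"
  have 1: "d (\<theta> x) \<in> Ffilt deg Vf q (n + r)" by (intro d_Ffilt DF_app[OF t x])
  have 2: "\<theta> (d x) \<in> Ffilt deg Vf q (n + r)" by (intro DF_app[OF t] d_Ffilt x)
  show "dbr (-1) j d \<theta> x \<in> Ffilt deg Vf q (n + r)"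
    unfolding dbr_def using 1 2 by (intro Ffilt_minus Ffilt_smul)
qed

end

context filt
begin

lemma complete:
  fixes k :: int and \<Theta> :: "nat \<Rightarrow> ('b tens \<Rightarrow> 'b tens)"
  assumes H: "\<forall>n\<ge>1. \<Theta> n \<in> DF deg Vf q 1 \<and> is_der deg k (\<Theta> n) \<and> \<Theta> (Suc n) - \<Theta> n \<in> DF deg Vf q n"
  shows "\<exists>\<theta>\<in>DF deg Vf q 1. is_der deg k \<theta> \<and> (\<forall>n\<ge>1. \<theta> - \<Theta> n \<in> DF deg Vf q n)"
proof -
  define N where "N L = tri q (Suc L) + 1" for L
  have N1: "N L \<ge> 1" for L by (simp add: N_def)
  have Nmono: "N L \<le> N L'" if "L \<le> L'" for L L' using tri_mono[of "Suc L" "Suc L'" q] that by (simp add: N_def)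
  have der: "is_der deg k (\<Theta> m)" if "m \<ge> 1" for m using H that by blast
  have stp: "\<Theta> (Suc m) x w = \<Theta> m x w" if m: "m \<ge> N L" and w: "length w \<le> L" for m L x w
  proof (cases "x \<in> Lhat deg")
    case True
    have m1: "m \<ge> 1" using m N1[of L] by linarith
    have x1: "x \<in> Ffilt deg Vf q 1" using True by (rule Lhat_Ffilt1)
    have "\<Theta> (Suc m) - \<Theta> m \<in> DF deg Vf q m" using H m1 by blast
    then have "(\<Theta> (Suc m) - \<Theta> m) x \<in> Ffilt deg Vf q (m + 1)" using x1 by (rule DF_app)
    then have "(\<Theta> (Suc m) - \<Theta> m) x w = 0"
      by (rule Ffilt_vanish[where L=L]) (use m w in \<open>auto simp: N_def\<close>)
    then show ?thesis by (simp add: dminus_app)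
  next
    case False
    have m1: "m \<ge> 1" using m N1[of L] by linarith
    show ?thesis using der_out[OF der False] der_out[OF der False] m1 by simp
  qed
  have stab: "\<Theta> m x w = \<Theta> (N L) x w" if m: "m \<ge> N L" and w: "length w \<le> L" for m L x w
    using m
  proof (induction m rule: dec_induct)
    case base then show ?case by simp
  next
    case (step m) then show ?case using stp[where m=m and L=L and x=x and w=w] w by simp
  qed
  define \<theta> where "\<theta> x = (\<lambda>w. \<Theta> (N (length w)) x w)" for x
  have tapp: "\<theta> x w = \<Theta> m x w" if "m \<ge> N (length w)" for m x w
    using stab[OF that order_refl] by (simp add: \<theta>_def)
  have tloc: "\<theta> x u = \<Theta> (N (length w)) x u" if "length u \<le> length w" for x u w
    using tapp Nmono[OF that] by simp
  have isd: "is_der deg k \<theta>"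
    unfolding is_der_def
  proof (intro conjI allI ballI impI)
    fix x assume x: "x \<notin> Lhat deg"
    show "\<theta> x = 0" by (rule ext) (simp add: \<theta>_def der_out[OF der[OF N1] x])
  next
    fix x assume x: "x \<in> Lhat deg"
    have "degs deg (\<theta> x) \<subseteq> (\<lambda>j. j + k) ` degs deg x"
    proof
      fix e assume "e \<in> degs deg (\<theta> x)"
      then obtain w where w: "e = wdeg deg w" "\<theta> x w \<noteq> 0" by (auto simp: degs_def)
      then have "\<Theta> (N (length w)) x w \<noteq> 0" by (simp add: \<theta>_def)
      then show "e \<in> (\<lambda>j. j + k) ` degs deg x" using der_degs[OF der[OF N1] x] w by blast
    qed
    moreover have "finite (degs deg x)" using x by (simp add: Lhat_def TT_def)
    ultimately have fd: "finite (degs deg (\<theta> x))" by (auto intro: finite_subset)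
    have TL: "\<Theta> (N n) x \<in> Lhat deg" for n by (rule der_Lhat[OF der[OF N1] x])
    have eqn: "{w. length w = n \<and> \<theta> x w \<noteq> 0} = {w. length w = n \<and> \<Theta> (N n) x w \<noteq> 0}" for n
      by (auto simp: \<theta>_def)
    have fl: "finite {w. length w = n \<and> \<theta> x w \<noteq> 0}" for n
      unfolding eqn using TL[of n] by (simp add: Lhat_def TT_def)
    have lc: "lencomp (\<theta> x) n = lencomp (\<Theta> (N n) x) n" for n
      by (auto simp: fun_eq_iff lencomp_apply \<theta>_def)
    have "lencomp (\<theta> x) n \<in> Ln deg n" for n
      unfolding lc using TL[of n] by (simp add: Lhat_def)
    then show "\<theta> x \<in> Lhat deg" using fd fl by (simp add: Lhat_def TT_def)
  next
    fix x y assume x: "x \<in> Lhat deg" and y: "y \<in> Lhat deg"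
    show "\<theta> (x + y) = \<theta> x + \<theta> y"
    proof (rule ext)
      fix w :: "'b list"
      show "\<theta> (x + y) w = (\<theta> x + \<theta> y) w"
        using der_add[OF der[OF N1] x y] by (simp add: \<theta>_def)
    qed
  next
    fix c x assume x: "x \<in> Lhat deg"
    show "\<theta> (smul c x) = smul c (\<theta> x)"
    proof (rule ext)
      fix w :: "'b list"
      show "\<theta> (smul c x) w = smul c (\<theta> x) w"
        using der_smul[OF der[OF N1] x] by (simp add: \<theta>_def)
    qed
  next
    fix j x assume x: "x \<in> Lhat deg" and h: "homog deg j x"
    show "homog deg (j + k) (\<theta> x)"
      unfolding homog_def
    proof (intro allI impI)
      fix w assume "\<theta> x w \<noteq> 0"
      then have "\<Theta> (N (length w)) x w \<noteq> 0" by (simp add: \<theta>_def)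
      then show "wdeg deg w = j + k" using der_homog[OF der[OF N1] x h] by (simp add: homog_def)
    qed
  next
    fix j x y assume x: "x \<in> Lhat deg" and y: "y \<in> Lhat deg" and h: "homog deg j x"
    show "\<theta> (br deg x y) = br deg (\<theta> x) y + smul (ksign (k * j)) (br deg x (\<theta> y))"
    proof (rule ext)
      fix w :: "'b list"
      let ?M = "N (length w)"
      have "\<theta> (br deg x y) w = \<Theta> ?M (br deg x y) w" by (simp add: \<theta>_def)
      also have "\<dots> = br deg (\<Theta> ?M x) y w + ksign (k * j) * br deg x (\<Theta> ?M y) w"
        by (simp add: der_br[OF der[OF N1] x y h])
      also have "br deg (\<Theta> ?M x) y w = br deg (\<theta> x) y w"
        by (rule br_local) (simp add: tloc)
      also have "br deg x (\<Theta> ?M y) w = br deg x (\<theta> y) w"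
        by (rule br_local) (simp add: tloc)
      finally show "\<theta> (br deg x y) w = (br deg (\<theta> x) y + smul (ksign (k * j)) (br deg x (\<theta> y))) w"
        by simp
    qed
  qed
  have tele: "(\<Theta> m - \<Theta> n) x \<in> Ffilt deg Vf q (n + r)"
    if n: "n \<ge> 1" and m: "m \<ge> n" and x: "x \<in> Ffilt deg Vf q r" for n m r x
    using m
  proof (induction m rule: dec_induct)
    case base
    have e: "(\<Theta> n - \<Theta> n) x = 0" by (simp add: dminus_app)
    show ?case unfolding e by (rule Ffilt_zero) (use n in simp)
  next
    case (step m)
    have m1: "m \<ge> 1" using step n by simp
    have "\<Theta> (Suc m) - \<Theta> m \<in> DF deg Vf q m" using H m1 by blast
    then have "(\<Theta> (Suc m) - \<Theta> m) x \<in> Ffilt deg Vf q (m + r)" using x by (rule DF_app)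
    moreover have "Ffilt deg Vf q (m + r) \<subseteq> Ffilt deg Vf q (n + r)"
      using step n by (intro Ffilt_anti) auto
    ultimately have 1: "(\<Theta> (Suc m) - \<Theta> m) x \<in> Ffilt deg Vf q (n + r)" by blast
    have e: "(\<Theta> (Suc m) - \<Theta> n) x = (\<Theta> (Suc m) - \<Theta> m) x + (\<Theta> m - \<Theta> n) x"
      by (simp add: dminus_app)
    show ?case unfolding e by (rule Ffilt_add[OF 1 step.IH])
  qed
  have diff: "\<theta> - \<Theta> n \<in> DF deg Vf q n" if n: "n \<ge> 1" for n
  proof (rule DF_intro)
    have dd: "is_der deg k (\<theta> - \<Theta> n)" by (rule is_der_minus[OF isd der[OF n]])
    then show "\<theta> - \<Theta> n \<in> DerL deg" by (rule DerL_der)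
    fix r x assume r: "r \<ge> 1" and x: "x \<in> Ffilt deg Vf q r"
    have xL: "x \<in> Lhat deg" using x by (rule Ffilt_Lhat)
    show "(\<theta> - \<Theta> n) x \<in> Ffilt deg Vf q (n + r)"
    proof (rule Ffilt_limit)
      show "(\<theta> - \<Theta> n) x \<in> Lhat deg" by (rule der_Lhat[OF dd xL])
      show "n + r \<ge> 1" using n by simp
      fix L
      let ?m = "max n (N L)"
      have z: "(\<Theta> ?m - \<Theta> n) x \<in> Ffilt deg Vf q (n + r)" by (rule tele[OF n _ x]) simp
      have "\<forall>w. length w \<le> L \<longrightarrow> (\<theta> - \<Theta> n) x w = (\<Theta> ?m - \<Theta> n) x w"
      proof (intro allI impI)
        fix w :: "'b list" assume "length w \<le> L"
        then have "?m \<ge> N (length w)" using Nmono by (meson le_trans max.cobounded2)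
        then show "(\<theta> - \<Theta> n) x w = (\<Theta> ?m - \<Theta> n) x w" using tapp by (simp add: dminus_app)
      qed
      then show "\<exists>z\<in>Ffilt deg Vf q (n + r). \<forall>w. length w \<le> L \<longrightarrow> (\<theta> - \<Theta> n) x w = z w"
        using z by blast
    qed
  qed
  have "\<theta> = (\<theta> - \<Theta> 1) + \<Theta> 1" by simp
  moreover have "(\<theta> - \<Theta> 1) + \<Theta> 1 \<in> DF deg Vf q 1"
    using diff[of 1] H by (intro DF_add) auto
  ultimately have "\<theta> \<in> DF deg Vf q 1" by simp
  then show ?thesis using isd diff by blast
qed

end

theorem proposition2p2:
  fixes deg :: "'b \<Rightarrow> int" and d :: "'b tens \<Rightarrow> 'b tens"
    and Vf :: "nat \<Rightarrow> 'b tens set" and q :: nat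
  assumes connected: "\<forall>k<0. \<forall>x\<in>Lhat deg. homog deg k x \<longrightarrow> x = 0"
    and bounded: "\<exists>m. \<forall>k>m. \<forall>x\<in>Vsp deg. homog deg k x \<longrightarrow> x = 0"
    and d_der: "is_der deg (-1) d"
    and d_sq: "\<forall>x. d (d x) = 0"
    and d_filt: "\<forall>n. \<forall>x\<in>Lge deg n. d x \<in> Lge deg n"
    and minimal: "\<forall>v\<in>Vsp deg. d v \<in> Lge deg 2"
    and Vf0: "Vf 0 = Vsp deg"
    and Vf_dec: "\<forall>\<alpha><q. Vf (Suc \<alpha>) \<subseteq> Vf \<alpha>"
    and Vfq: "Vf q = {0}"
    and Vf_graded: "\<forall>\<alpha>\<le>q. graded_subspace_V deg (Vf \<alpha>)"
  shows
    \<comment> \<open>decreasing filtration of graded subspaces of Der L\<close>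
    "(\<forall>n\<ge>1. DF deg Vf q (Suc n) \<subseteq> DF deg Vf q n) \<and>
     (\<forall>n\<ge>1. 0 \<in> DF deg Vf q n \<and>
        (\<forall>\<theta>\<in>DF deg Vf q n. \<forall>\<eta>\<in>DF deg Vf q n. \<theta> + \<eta> \<in> DF deg Vf q n) \<and>
        (\<forall>c. \<forall>\<theta>\<in>DF deg Vf q n. (\<lambda>x. smul c (\<theta> x)) \<in> DF deg Vf q n) \<and>
        (\<forall>\<theta>\<in>DF deg Vf q n. \<forall>k. dercomp deg \<theta> k \<in> DF deg Vf q n)) \<and>
     \<comment> \<open>stable under the differential D = [d,-]\<close>
     (\<forall>n\<ge>1. \<forall>j. \<forall>\<theta>\<in>DF deg Vf q n. is_der deg j \<theta> \<longrightarrow> dbr (-1) j d \<theta> \<in> DF deg Vf q n) \<and>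
     \<comment> \<open>[F^m, F^n] \<subseteq> F^(m+n)\<close>
     (\<forall>m\<ge>1. \<forall>n\<ge>1. \<forall>j k. \<forall>\<theta>\<in>DF deg Vf q m. \<forall>\<eta>\<in>DF deg Vf q n.
        is_der deg j \<theta> \<longrightarrow> is_der deg k \<eta> \<longrightarrow> dbr j k \<theta> \<eta> \<in> DF deg Vf q (m + n)) \<and>
     \<comment> \<open>completeness: F^1 \<rightarrow> lim F^1/F^n is injective and (degreewise) surjective\<close>
     (\<Inter>n\<in>{1..}. DF deg Vf q n) = {0} \<and>
     (\<forall>k. \<forall>\<Theta>::nat \<Rightarrow> ('b tens \<Rightarrow> 'b tens).
        (\<forall>n\<ge>1. \<Theta> n \<in> DF deg Vf q 1 \<and> is_der deg k (\<Theta> n) \<and> \<Theta> (Suc n) - \<Theta> n \<in> DF deg Vf q n) \<longrightarrow>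
        (\<exists>\<theta>\<in>DF deg Vf q 1. is_der deg k \<theta> \<and> (\<forall>n\<ge>1. \<theta> - \<Theta> n \<in> DF deg Vf q n)))"
proof -
  interpret dfilt deg Vf q d
    by unfold_locales (use Vf0 Vf_dec Vfq Vf_graded d_der d_filt minimal in auto)
  show ?thesis
  proof (intro conjI)
    show "\<forall>n\<ge>1. DF deg Vf q (Suc n) \<subseteq> DF deg Vf q n" using DF_mono by blast
    show "\<forall>n\<ge>1. 0 \<in> DF deg Vf q n \<and>
        (\<forall>\<theta>\<in>DF deg Vf q n. \<forall>\<eta>\<in>DF deg Vf q n. \<theta> + \<eta> \<in> DF deg Vf q n) \<and>
        (\<forall>c. \<forall>\<theta>\<in>DF deg Vf q n. (\<lambda>x. smul c (\<theta> x)) \<in> DF deg Vf q n) \<and>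
        (\<forall>\<theta>\<in>DF deg Vf q n. \<forall>k. dercomp deg \<theta> k \<in> DF deg Vf q n)"
      using DF_zero DF_add DF_smul DF_dercomp by blast
    show "\<forall>n\<ge>1. \<forall>j. \<forall>\<theta>\<in>DF deg Vf q n. is_der deg j \<theta> \<longrightarrow> dbr (-1) j d \<theta> \<in> DF deg Vf q n"
      using DF_D by blast
    show "\<forall>m\<ge>1. \<forall>n\<ge>1. \<forall>j k. \<forall>\<theta>\<in>DF deg Vf q m. \<forall>\<eta>\<in>DF deg Vf q n.
        is_der deg j \<theta> \<longrightarrow> is_der deg k \<eta> \<longrightarrow> dbr j k \<theta> \<eta> \<in> DF deg Vf q (m + n)"
      using DF_br by blast
    show "(\<Inter>n\<in>{1..}. DF deg Vf q n) = {0}" by (rule DF_Inter)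
    show "\<forall>k. \<forall>\<Theta>::nat \<Rightarrow> ('b tens \<Rightarrow> 'b tens).
        (\<forall>n\<ge>1. \<Theta> n \<in> DF deg Vf q 1 \<and> is_der deg k (\<Theta> n) \<and> \<Theta> (Suc n) - \<Theta> n \<in> DF deg Vf q n) \<longrightarrow>
        (\<exists>\<theta>\<in>DF deg Vf q 1. is_der deg k \<theta> \<and> (\<forall>n\<ge>1. \<theta> - \<Theta> n \<in> DF deg Vf q n))"
      using complete by blast
  qed
qed

end
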